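(* Let $X$ be a stacked simplicial complex of dimension $d$, let $\mathcal F$ be any partition of the set of facets of $X$, and let $\sim'_V$ be the relation on vertices associated with $\mathcal F$. Fix a codimension one face $c$, with associated $X_m$ and $V_m$. Let $m\ge1$, $v\in V_m\setminus V_{m-1}$, and let $u,w$ be distinct vertices in $V_m$ such that $v\sim'_V u$ and $v\sim'_V w$. Then $u\sim'_V w$.
   Context: A simplicial complex $X$ on a finite vertex set $V$ is a family of subsets (faces) of $V$ closed under taking subsets, every element of $V$ lying in some face; facets are inclusion-maximal faces. $X$ is pure of dimension $d$ if every facet has $d+1$ elements; a codimension one face is a face with $d$ elements. $X$ is stacked if it is pure of some dimension $d$ and its facets can be ordered $F_0,\dots,F_k$ such that for each $p\ge1$, $F_p$ contains exactly one vertex $v_p$ not in $F_0\cup\dots\cup F_{p-1}$, and $F_p\setminus\{v_p\}\subseteq F_j$ for some $j<p$. A walk is a sequence of facets $f_1,\dots,f_p$ ($p\ge1$) with each $f_i\cap f_{i+1}$ of exactly $d$ elements; a path is a walk in which the faces $f_i\cap f_{i+1}$, $1\le i<p$, are pairwise distinct. For faces $h,k$ with $h\cup k$ not contained in any codimension one face, a path between $h$ and $k$, written $h\,|\,f_1,\dots,f_p\,|\,k$, is a path with $h\subseteq f_1$, $k\subseteq f_p$ and, if $p\ge2$, $h\not\subseteq f_1\cap f_2$, $k\not\subseteq f_p\cap f_{p-1}$; in a stacked complex it exists and is unique. Relation $\sim'_V$: for distinct vertices $v,w$ not lying in a common facet, let $v\,|\,f_1,\dots,f_p\,|\,w$ be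 the unique path between $\{v\}$ and $\{w\}$; then $v\sim'_V w$ iff $f_1$ and $f_p$ lie in the same part $Q$ of $\mathcal F$ and none of $f_2,\dots,f_{p-1}$ lies in $Q$. (Vertices lying in a common facet are never related by $\sim'_V$.) Distance neighbourhoods: the distance from a facet $f$ to $c$ is the minimal $r\ge1$ such that there is a walk $f_1,\dots,f_r$ with $f_1=f$ and $c\subseteq f_r$; $X_m$ is the set of facets at distance $\le m$ from $c$; $V_0$ is the vertex set of $c$ and, for $m\ge1$, $V_m$ is the set of vertices of facets in $X_m$. *)

theory Defs
  imports Main "HOL-Library.Disjoint_Sets"
begin

definition simplicial_complex :: "'a set \<Rightarrow> 'a set set \<Rightarrow> bool" where
  "simplicial_complex V X \<longleftrightarrow> finite V \<and> (\<forall>F\<in>X. F \<subseteq> V)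
     \<and> (\<forall>F\<in>X. \<forall>G. G \<subseteq> F \<longrightarrow> G \<in> X) \<and> (\<forall>v\<in>V. \<exists>F\<in>X. v \<in> F)"

definition facets :: "'a set set \<Rightarrow> 'a set set" where
  "facets X = {F \<in> X. \<forall>G\<in>X. F \<subseteq> G \<longrightarrow> G = F}"

definition pure :: "'a set set \<Rightarrow> nat \<Rightarrow> bool" where
  "pure X d \<longleftrightarrow> (\<forall>F\<in>facets X. card F = d + 1)"

definition stacked :: "'a set set \<Rightarrow> nat \<Rightarrow> bool" where
  "stacked X d \<longleftrightarrow> pure X d \<and>
     (\<exists>fs. fs \<noteq> [] \<and> distinct fs \<and> set fs = facets X \<and>
        (\<forall>p. 1 \<le> p \<and> p < length fs \<longrightarrow>
           (\<exists>v. fs ! p - (\<Union>j<p. fs ! j) = {v} \<and>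
                (\<exists>j<p. fs ! p - {v} \<subseteq> fs ! j))))"

definition walk :: "'a set set \<Rightarrow> nat \<Rightarrow> 'a set list \<Rightarrow> bool" where
  "walk X d fs \<longleftrightarrow> fs \<noteq> [] \<and> set fs \<subseteq> facets X \<and>
     (\<forall>i. i + 1 < length fs \<longrightarrow> card (fs ! i \<inter> fs ! (i + 1)) = d)"

definition path :: "'a set set \<Rightarrow> nat \<Rightarrow> 'a set list \<Rightarrow> bool" where
  "path X d fs \<longleftrightarrow> walk X d fs \<and>
     distinct (map (\<lambda>i. fs ! i \<inter> fs ! (i + 1)) [0..<length fs - 1])"

definition path_between :: "'a set set \<Rightarrow> nat \<Rightarrow> 'a set \<Rightarrow> 'a set list \<Rightarrow> 'a set \<Rightarrow> bool" where
  "path_between X d h fs k \<longleftrightarrow> path X d fs \<and> h \<subseteq> hd fs \<and> k \<subseteq> last fs \<and>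
     (2 \<le> length fs \<longrightarrow>
        \<not> h \<subseteq> fs ! 0 \<inter> fs ! 1 \<and>
        \<not> k \<subseteq> fs ! (length fs - 1) \<inter> fs ! (length fs - 2))"

definition rel_V :: "'a set set \<Rightarrow> nat \<Rightarrow> 'a set set set \<Rightarrow> 'a \<Rightarrow> 'a \<Rightarrow> bool" where
  "rel_V X d \<F> v w \<longleftrightarrow> v \<noteq> w \<and> v \<in> \<Union>X \<and> w \<in> \<Union>X \<and>
     \<not> (\<exists>F\<in>facets X. v \<in> F \<and> w \<in> F) \<and>
     (let fs = (THE fs. path_between X d {v} fs {w}) in
       \<exists>Q\<in>\<F>. hd fs \<in> Q \<and> last fs \<in> Q \<and>
         (\<forall>i. 1 \<le> i \<and> i < length fs - 1 \<longrightarrow> fs ! i \<notin> Q))"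

definition reaches :: "'a set set \<Rightarrow> nat \<Rightarrow> 'a set \<Rightarrow> 'a set \<Rightarrow> nat \<Rightarrow> bool" where
  "reaches X d c f r \<longleftrightarrow> 1 \<le> r \<and>
     (\<exists>fs. walk X d fs \<and> length fs = r \<and> hd fs = f \<and> c \<subseteq> last fs)"

definition facet_dist :: "'a set set \<Rightarrow> nat \<Rightarrow> 'a set \<Rightarrow> 'a set \<Rightarrow> nat" where
  "facet_dist X d c f = (LEAST r. reaches X d c f r)"

definition Xm :: "'a set set \<Rightarrow> nat \<Rightarrow> 'a set \<Rightarrow> nat \<Rightarrow> 'a set set" where
  "Xm X d c m = {f \<in> facets X. (\<exists>r. reaches X d c f r) \<and> facet_dist X d c f \<le> m}"

definition Vm :: "'a set set \<Rightarrow> nat \<Rightarrow> 'a set \<Rightarrow> nat \<Rightarrow> 'a set" where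
  "Vm X d c m = (if m = 0 then c else \<Union>(Xm X d c m))"

end

theory Submission
  imports Defs
begin


fun nbk :: "'n list \<Rightarrow> bool" where
  "nbk (x # y # z # r) = (x \<noteq> z \<and> nbk (y # z # r))"
| "nbk _ = True"

lemma nbk_tl: "nbk xs \<Longrightarrow> nbk (tl xs)"
  by (induction xs rule: nbk.induct) auto

lemma nbk_Cons: "nbk (x # xs) \<Longrightarrow> nbk xs"
  using nbk_tl[of "x#xs"] by simp

lemma nbk_append1: "nbk (xs @ ys) \<Longrightarrow> nbk xs"
  by (induction xs rule: nbk.induct) (auto simp: Cons_eq_append_conv)

lemma nbk_append2: "nbk (xs @ ys) \<Longrightarrow> nbk ys"
  by (induction xs) (auto dest: nbk_Cons)

lemma nbk_snoc: "nbk (xs @ [a, b, c]) \<longleftrightarrow> nbk (xs @ [a, b]) \<and> a \<noteq> c"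
  by (induction xs rule: nbk.induct) auto

lemma nbk_rev: "nbk xs \<Longrightarrow> nbk (rev xs)"
proof (induction xs rule: nbk.induct)
  case (1 x y z r)
  then have "nbk (rev r @ [z, y])" by auto
  moreover have "nbk (rev r @ [z, y, x])"
  proof (cases "rev r")
    case Nil then show ?thesis using 1 by auto
  next
    case (Cons a l)
    have "nbk (rev r @ [z]) " using nbk_append1[of "rev r @ [z]" "[y]"] \<open>nbk (rev r @ [z, y])\<close> by simp
    show ?thesis using nbk_snoc[of "rev r" z y x] 1 \<open>nbk (rev r @ [z, y])\<close> by auto
  qed
  then show ?case by simp
qed auto

lemma nbk_join:
  assumes "nbk (xs @ [y])" "nbk (y # ys)"
    and "xs \<noteq> [] \<Longrightarrow> ys \<noteq> [] \<Longrightarrow> last xs \<noteq> hd ys"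
  shows "nbk (xs @ y # ys)"
  using assms
proof (induction xs rule: nbk.induct)
  case (1 x y' z r)
  then show ?case by (cases r) (auto simp: Cons_eq_append_conv)
next
  case ("2_1")
  then show ?case by simp
next
  case ("2_2" x)
  then show ?case by (cases ys) auto
next
  case ("2_3" x y')
  then show ?case by (cases ys) auto
qed

lemma tl_rev': "tl (rev xs) = rev (butlast xs)"
  by (metis butlast_rev rev_rev_ident)

lemma last_join: "last xs = hd ys \<Longrightarrow> ys \<noteq> [] \<Longrightarrow> last (xs @ tl ys) = last ys"
proof (cases ys)
  case (Cons a r)
  assume "last xs = hd ys"
  then show ?thesis using Cons by (cases "r = []") auto
qed simp

lemma in_tl_nth: "x \<in> set (tl P) \<longleftrightarrow> (\<exists>j. 1 \<le> j \<and> j < length P \<and> P ! j = x)"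
proof (cases P)
  case (Cons a r)
  show ?thesis
  proof
    assume "x \<in> set (tl P)"
    then obtain i where "i < length r" "r ! i = x" using Cons by (auto simp: in_set_conv_nth)
    then show "\<exists>j. 1 \<le> j \<and> j < length P \<and> P ! j = x" using Cons
      by (rule_tac x="Suc i" in exI) auto
  next
    assume "\<exists>j. 1 \<le> j \<and> j < length P \<and> P ! j = x"
    then obtain j where j: "1 \<le> j" "j < length P" "P ! j = x" by blast
    then obtain i where "j = Suc i" by (cases j) auto
    then show "x \<in> set (tl P)" using j Cons by (auto simp: in_set_conv_nth)
  qed
qed simp

lemma in_butlast_nth: "x \<in> set (butlast P) \<longleftrightarrow> (\<exists>j. j + 1 < length P \<and> P ! j = x)"
  apply (auto simp: in_set_conv_nth nth_butlast)
   apply (rule_tac x=i in exI, simp)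
  apply (rule_tac x=j in exI, simp add: nth_butlast)
  done

lemma hd_join: "xs \<noteq> [] \<Longrightarrow> hd (xs @ tl ys) = hd xs"
  by simp

locale rtree =
  fixes N :: "'n set" and root :: 'n and par :: "'n \<Rightarrow> 'n" and rk :: "'n \<Rightarrow> nat"
  assumes root_in: "root \<in> N"
    and par_in: "\<And>x. x \<in> N \<Longrightarrow> x \<noteq> root \<Longrightarrow> par x \<in> N"
    and rk_dec: "\<And>x. x \<in> N \<Longrightarrow> x \<noteq> root \<Longrightarrow> rk (par x) < rk x"
begin

definition up :: "'n \<Rightarrow> 'n \<Rightarrow> bool" where "up x y \<longleftrightarrow> x \<in> N \<and> x \<noteq> root \<and> y = par x"
definition adj where "adj x y \<longleftrightarrow> up x y \<or> up y x"
definition twalk where "twalk P \<longleftrightarrow> P \<noteq> [] \<and> set P \<subseteq> N \<and> successively adj P"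
definition nbw where "nbw P \<longleftrightarrow> twalk P \<and> nbk P"

lemma up_rk: "up x y \<Longrightarrow> rk y < rk x"
  using rk_dec by (auto simp: up_def)

lemma up_N: "up x y \<Longrightarrow> x \<in> N \<and> y \<in> N"
  using par_in by (auto simp: up_def)

lemma adj_sym: "adj x y \<Longrightarrow> adj y x" by (auto simp: adj_def)

lemma adj_neq: "adj x y \<Longrightarrow> x \<noteq> y"
  using up_rk by (auto simp: adj_def)

lemma up_fun: "up x y \<Longrightarrow> up x z \<Longrightarrow> y = z" by (auto simp: up_def)

lemma down_all: "nbw (a # b # r) \<Longrightarrow> up b a \<Longrightarrow> successively (\<lambda>x y. up y x) (a # b # r)"
proof (induction r arbitrary: a b)
  case Nil then show ?case by simp
next
  case (Cons c r)
  have ab: "adj b c" "a \<noteq> c" using Cons.prems by (auto simp: nbw_def twalk_def)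
  have "up c b"
  proof (rule ccontr)
    assume "\<not> up c b"
    then have "up b c" using ab by (auto simp: adj_def)
    then show False using up_fun[OF \<open>up b c\<close> Cons.prems(2)] ab by simp
  qed
  moreover have "nbw (b # c # r)" using Cons.prems
    by (auto simp: nbw_def twalk_def dest: nbk_Cons)
  ultimately show ?case using Cons by auto
qed

lemma succ_up_rk: "successively up P \<Longrightarrow> 2 \<le> length P \<Longrightarrow> rk (last P) < rk (hd P)"
proof (induction P rule: induct_list012)
  case (3 x y zs)
  then show ?case
  proof (cases zs)
    case Nil then show ?thesis using 3 up_rk by auto
  next
    case (Cons a l)
    then show ?thesis using 3 up_rk by fastforce
  qed
qed auto

lemma succ_down_rk: "successively (\<lambda>x y. up y x) P \<Longrightarrow> 2 \<le> length P \<Longrightarrow> rk (hd P) < rk (last P)"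
proof (induction P rule: induct_list012)
  case (3 x y zs)
  then show ?case
  proof (cases zs)
    case Nil then show ?thesis using 3 up_rk by auto
  next
    case (Cons a l)
    then show ?thesis using 3 up_rk by fastforce
  qed
qed auto

lemma nbw_rev: "nbw P \<Longrightarrow> nbw (rev P)"
  unfolding nbw_def twalk_def using nbk_rev
  by (auto simp: successively_rev intro: successively_mono adj_sym)

lemma nbw_appendD1: "nbw (xs @ ys) \<Longrightarrow> xs \<noteq> [] \<Longrightarrow> nbw xs"
  unfolding nbw_def twalk_def using nbk_append1 by (auto simp: successively_append_iff)

lemma nbw_appendD2: "nbw (xs @ ys) \<Longrightarrow> ys \<noteq> [] \<Longrightarrow> nbw ys"
  unfolding nbw_def twalk_def using nbk_append2 by (auto simp: successively_append_iff)

lemma nbw_take: "nbw P \<Longrightarrow> 0 < n \<Longrightarrow> nbw (take n P)"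
  using nbw_appendD1[of "take n P" "drop n P"] by (auto simp: nbw_def twalk_def)

lemma nbw_drop: "nbw P \<Longrightarrow> n < length P \<Longrightarrow> nbw (drop n P)"
  using nbw_appendD2[of "take n P" "drop n P"] by auto

lemma nbw_tl: "nbw P \<Longrightarrow> 2 \<le> length P \<Longrightarrow> nbw (tl P)"
  using nbw_drop[of P 1] by (simp add: drop_Suc)

lemma nbw_butlast: "nbw P \<Longrightarrow> 2 \<le> length P \<Longrightarrow> nbw (butlast P)"
  using nbw_take[of P "length P - 1"] by (simp add: butlast_conv_take)

lemma nbw_join:
  assumes "nbw xs" "nbw ys" "last xs = hd ys"
    and "2 \<le> length xs \<Longrightarrow> 2 \<le> length ys \<Longrightarrow> xs ! (length xs - 2) \<noteq> ys ! 1"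
  shows "nbw (xs @ tl ys)"
proof -
  obtain xs' y where xs: "xs = xs' @ [y]" using assms(1)
    by (metis nbw_def twalk_def rev_exhaust)
  obtain ys' where ys: "ys = y # ys'" using assms(2,3) xs
    by (metis last_snoc list.collapse nbw_def twalk_def)
  have "nbk (xs' @ y # ys')"
  proof (rule nbk_join)
    show "nbk (xs' @ [y])" using assms(1) xs by (simp add: nbw_def)
    show "nbk (y # ys')" using assms(2) ys by (simp add: nbw_def)
    assume "xs' \<noteq> []" "ys' \<noteq> []"
    then have "xs ! (length xs - 2) = last xs'" "ys ! 1 = hd ys'" using xs ys
      by (auto simp: nth_append last_conv_nth hd_conv_nth)
    moreover have "2 \<le> length xs" "2 \<le> length ys" using xs ys \<open>xs' \<noteq> []\<close> \<open>ys' \<noteq> []\<close>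
      by (auto simp: Suc_le_eq)
    ultimately show "last xs' \<noteq> hd ys'" using assms(4) by auto
  qed
  moreover have "twalk (xs' @ y # ys')" using assms(1,2) xs ys
    unfolding nbw_def twalk_def
    by (auto simp: successively_append_iff successively_Cons)
  ultimately show ?thesis using xs ys by (simp add: nbw_def)
qed

lemma up_all_last:
  assumes "nbw (xs @ [y, z])" "up y z"
  shows "successively up (xs @ [y, z])"
proof -
  have "nbw (z # y # rev xs)" using nbw_rev[OF assms(1)] by simp
  from down_all[OF this assms(2)]
  have "successively (\<lambda>x y. up y x) (rev (xs @ [y, z]))" by simp
  from this[unfolded successively_rev] show ?thesis by simp
qed

lemma split_last2: "2 \<le> length P \<Longrightarrow> \<exists>xs y z. P = xs @ [y, z]"
proof -
  assume "2 \<le> length P"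
  then obtain xs y z where "rev P = z # y # xs"
    by (metis Suc_le_length_iff numeral_2_eq_2 length_rev)
  then have "P = rev xs @ [y, z]" by (metis rev_rev_ident rev.simps append.simps append_assoc)
  then show ?thesis by blast
qed

lemma loopfree: "nbw P \<Longrightarrow> hd P = last P \<Longrightarrow> length P = 1"
proof (induction "length P" arbitrary: P rule: less_induct)
  case less
  show ?case
  proof (rule ccontr)
    assume "length P \<noteq> 1"
    moreover have "P \<noteq> []" using less.prems by (auto simp: nbw_def twalk_def)
    ultimately have len: "2 \<le> length P" by (cases P) (auto simp: Suc_le_eq)
    then obtain a b r where P: "P = a # b # r" by (metis Suc_le_length_iff numeral_2_eq_2)
    obtain xs y z where P2: "P = xs @ [y, z]" using split_last2[OF len] by blast
    have "z = last P" using P2 by simp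
    also have "\<dots> = a" using less.prems(2) P by simp
    finally have za: "z = a" .
    have adjab: "adj a b" using less.prems P by (auto simp: nbw_def twalk_def)
    have "\<not> up b a"
    proof
      assume "up b a"
      from succ_down_rk[OF down_all[OF less.prems(1)[unfolded P] this]] 
      have "rk a < rk (last (a # b # r))" by simp
      moreover have "last (a # b # r) = a" using less.prems(2) P by simp
      ultimately show False by simp
    qed
    then have ab: "up a b" using adjab by (auto simp: adj_def)
    have adjyz: "adj y z" using less.prems(1) P2 by (auto simp: nbw_def twalk_def successively_append_iff)
    have "\<not> up y z"
    proof
      assume "up y z"
      from succ_up_rk[OF up_all_last[OF less.prems(1)[unfolded P2] this]]
      have "rk (last (xs @ [y, z])) < rk (hd (xs @ [y, z]))" by simp
      then show False using less.prems(2) P2 by simp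
    qed
    then have "up z y" using adjyz by (auto simp: adj_def)
    then have yb: "y = b" using ab za up_fun by blast
    show False
    proof (cases "length P = 2")
      case True
      then have "P = [a, b]" using P by auto
      then show False using less.prems(2) adj_neq adjab by auto
    next
      case False
      define M where "M = butlast (tl P)"
      have lenM: "length M = length P - 2" by (simp add: M_def)
      have nbM: "nbw M" unfolding M_def
        using nbw_butlast[OF nbw_tl[OF less.prems(1) len]] len False by simp
      have r: "r \<noteq> []" using P False by auto
      have xs: "xs \<noteq> []" using P2 False by auto
      have hM: "hd M = b" unfolding M_def using P r by (cases r) auto
      have lM: "last M = y"
      proof -
        have "M = tl (butlast P)" unfolding M_def by (simp add: butlast_tl)
        also have "\<dots> = tl (xs @ [y])" using P2 by (simp add: butlast_append)
        also have "\<dots> = tl xs @ [y]" using xs by simp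
        finally show ?thesis by simp
      qed
      have "length M < length P" using lenM len by simp
      moreover have "hd M = last M" using hM lM yb by simp
      ultimately have "length M = 1" using less.hyps[OF _ nbM] by blast
      then have "length r = 1" using lenM P by simp
      then obtain q where "r = [q]" by (cases r) auto
      then have "P = [a, b, q]" using P by simp
      moreover then have "q = a" using less.prems(2) by simp
      ultimately have "P = [a, b, a]" by simp
      then show False using less.prems(1) by (simp add: nbw_def)
    qed
  qed
qed

lemma len1: "length P = 1 \<Longrightarrow> P = [hd P]"
  by (cases P) auto

lemma len2: "2 \<le> length P \<Longrightarrow> \<exists>a b r. P = a # b # r"
  by (metis Suc_le_length_iff numeral_2_eq_2)

lemma nbw_unique:
  "nbw P \<Longrightarrow> nbw P' \<Longrightarrow> hd P = hd P' \<Longrightarrow> last P = last P' \<Longrightarrow> P = P'"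
proof (induction "length P + length P'" arbitrary: P P' rule: less_induct)
  case less
  have ne: "P \<noteq> []" "P' \<noteq> []" using less.prems by (auto simp: nbw_def twalk_def)
  show ?case
  proof (cases "length P = 1")
    case True
    then have P: "P = [hd P]" using len1 by blast
    then have "hd P' = last P'" using less.prems(3,4) by (metis last.simps)
    then have "length P' = 1" using loopfree less.prems(2) by blast
    then have "P' = [hd P']" using len1 by blast
    then show ?thesis using P less.prems(3) by metis
  next
    case F1: False
    show ?thesis
    proof (cases "length P' = 1")
      case True
      then have P': "P' = [hd P']" using len1 by blast
      then have "hd P = last P" using less.prems(3,4) by (metis last.simps)
      then have "length P = 1" using loopfree less.prems(1) by blast
      then show ?thesis using F1 by simp
    next
      case F2: False
      have l1: "2 \<le> length P" using F1 ne by (cases P) (auto simp: Suc_le_eq)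
      have l2: "2 \<le> length P'" using F2 ne by (cases P') (auto simp: Suc_le_eq)
      obtain a b r where P: "P = a # b # r" using len2[OF l1] by blast
      obtain a' b' r' where P': "P' = a' # b' # r'" using len2[OF l2] by blast
      have aa: "a' = a" using less.prems(3) P P' by simp
      have adjab: "adj a b" using less.prems(1) P by (auto simp: nbw_def twalk_def)
      have adjab': "adj a b'" using less.prems(2) P' aa by (auto simp: nbw_def twalk_def)
      obtain xs y z where Q: "P = xs @ [y, z]" using split_last2[OF l1] by blast
      obtain xs' y' z' where Q': "P' = xs' @ [y', z']" using split_last2[OF l2] by blast
      have zz: "z' = z" using less.prems(4) Q Q' by simp
      have adjyz': "adj y' z" using less.prems(2) Q' zz
        by (auto simp: nbw_def twalk_def successively_append_iff)
      have adjyz: "adj y z" using less.prems(1) Q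
        by (auto simp: nbw_def twalk_def successively_append_iff)
      have butl: "P = P'" if yy: "y = y'"
      proof -
        have "butlast P = xs @ [y]" "butlast P' = xs' @ [y']" using Q Q' by (simp_all add: butlast_append)
        moreover have "nbw (butlast P)" "nbw (butlast P')"
          using nbw_butlast less.prems(1,2) l1 l2 by auto
        moreover have "hd (butlast P) = hd (butlast P')" using P P' aa by simp
        moreover have "length (butlast P) + length (butlast P') < length P + length P'"
          using l1 l2 by simp
        ultimately have "butlast P = butlast P'" using less.hyps yy by (metis last_snoc)
        then show ?thesis using Q Q' zz
          by (metis append_butlast_last_id ne less.prems(4))
      qed
      show ?thesis
      proof (cases "up a b \<and> up a b'")
        case True
        then have bb: "b' = b" using up_fun by blast
        have "nbw (tl P)" "nbw (tl P')" using nbw_tl less.prems(1,2) l1 l2 by auto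
        moreover have "hd (tl P) = hd (tl P')" using P P' bb by simp
        moreover have "last (tl P) = last (tl P')" using P P' less.prems(4) by simp
        moreover have "length (tl P) + length (tl P') < length P + length P'"
          using l1 l2 by simp
        ultimately have "tl P = tl P'" using less.hyps by blast
        then show ?thesis using P P' aa by simp
      next
        case False
        then have "up b a \<or> up b' a" using adjab adjab' by (auto simp: adj_def)
        then show ?thesis
        proof
          assume ba: "up b a"
          have dn: "successively (\<lambda>x y. up y x) P"
            using down_all[OF less.prems(1)[unfolded P] ba] P by simp
          then have "up z y" using Q by (simp add: successively_append_iff)
          have r1: "rk (hd P) < rk (last P)" using succ_down_rk[OF dn l1] .
          have "\<not> up y' z"
          proof
            assume "up y' z"
            then have "successively up P'" using up_all_last less.prems(2) Q' zz by blast
            from succ_up_rk[OF this l2] have "rk (last P') < rk (hd P')" .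
            then show False using r1 less.prems(3,4) by simp
          qed
          then have "up z y'" using adjyz' by (auto simp: adj_def)
          then have "y = y'" using \<open>up z y\<close> up_fun by blast
          then show ?thesis using butl by blast
        next
          assume ba: "up b' a"
          have dn: "successively (\<lambda>x y. up y x) P'"
            using down_all[OF less.prems(2)[unfolded P'] ba[folded aa]] P' by simp
          then have "up z y'" using Q' zz by (simp add: successively_append_iff)
          have r1: "rk (hd P') < rk (last P')" using succ_down_rk[OF dn l2] .
          have "\<not> up y z"
          proof
            assume "up y z"
            then have "successively up P" using up_all_last less.prems(1) Q by blast
            from succ_up_rk[OF this l1] have "rk (last P) < rk (hd P)" .
            then show False using r1 less.prems(3,4) by simp
          qed
          then have "up z y" using adjyz by (auto simp: adj_def)
          then have "y = y'" using \<open>up z y'\<close> up_fun by blast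
          then show ?thesis using butl by blast
        qed
      qed
    qed
  qed
qed

lemma reduce:
  "twalk P \<Longrightarrow> \<exists>R. nbw R \<and> hd R = hd P \<and> last R = last P \<and> set R \<subseteq> set P
     \<and> length (filter Q R) \<le> length (filter Q P)"
proof (induction P rule: induct_list012)
  case 1 then show ?case by (simp add: twalk_def)
next
  case (2 a) then show ?case by (rule_tac x="[a]" in exI) (simp add: nbw_def)
next
  case (3 a b rest)
  have tw: "twalk (b # rest)" and ab: "adj a b" and aN: "a \<in> N"
    using 3(3) by (auto simp: twalk_def)
  obtain R where R: "nbw R" "hd R = b" "last R = last (b # rest)" "set R \<subseteq> set (b # rest)"
    "length (filter Q R) \<le> length (filter Q (b # rest))"
    using 3(2)[OF tw] by auto
  obtain R0 where R0: "R = b # R0" using R(1,2) by (cases R) (auto simp: nbw_def twalk_def)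
  show ?case
  proof (cases R0)
    case Nil
    have "nbw [a, b]" using ab aN tw by (auto simp: nbw_def twalk_def)
    moreover have "last [a, b] = last (a # b # rest)" using R(3) R0 Nil by simp
    moreover have "length (filter Q [a, b]) \<le> length (filter Q (a # b # rest))"
      by (cases "Q b") auto
    ultimately show ?thesis by (rule_tac x="[a,b]" in exI) auto
  next
    case (Cons c R1)
    show ?thesis
    proof (cases "c = a")
      case True
      have "nbw (tl R)" using nbw_tl[of R] R(1) R0 Cons by simp
      moreover have "hd (tl R) = a" using R0 Cons True by simp
      moreover have "last (tl R) = last (a # b # rest)" using R(3) R0 Cons by simp
      moreover have "set (tl R) \<subseteq> set (a # b # rest)" using R(4) R0 by auto
      moreover have "length (filter Q (tl R)) \<le> length (filter Q (a # b # rest))"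
        using R(5) R0 by (cases "Q a"; cases "Q b") auto
      ultimately show ?thesis by (rule_tac x="tl R" in exI) auto
    next
      case False
      have "nbw (a # R)" using R(1) R0 Cons False ab aN
        by (auto simp: nbw_def twalk_def)
      moreover have "last (a # R) = last (a # b # rest)" using R(3) R0 by simp
      moreover have "set (a # R) \<subseteq> set (a # b # rest)" using R(4) by auto
      moreover have "length (filter Q (a # R)) \<le> length (filter Q (a # b # rest))"
        using R(5) by simp
      ultimately show ?thesis by (rule_tac x="a # R" in exI) auto
    qed
  qed
qed

lemma nbw_distinct: "nbw P \<Longrightarrow> distinct P"
proof -
  assume P: "nbw P"
  have "P ! i \<noteq> P ! j" if ij: "i < j" "j < length P" for i j
  proof
    assume e: "P ! i = P ! j"
    define S where "S = drop i (take (Suc j) P)"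
    have "nbw (take (Suc j) P)" using nbw_take P by blast
    then have "nbw S" unfolding S_def using ij by (intro nbw_drop) auto
    moreover have "hd S = P ! i" unfolding S_def using ij by (simp add: hd_drop_conv_nth)
    moreover have "last S = P ! j" unfolding S_def using ij
      by (simp add: take_Suc_conv_app_nth)
    moreover have "length S = Suc j - i" unfolding S_def using ij by simp
    ultimately have "length S = 1" using loopfree e by metis
    then show False using \<open>length S = Suc j - i\<close> ij by simp
  qed
  then show ?thesis unfolding distinct_conv_nth
    by (intro allI impI) (metis linorder_neqE_nat)
qed

definition conn :: "'n set \<Rightarrow> 'n \<Rightarrow> bool" where
  "conn S t \<longleftrightarrow> t \<in> S \<and> S \<subseteq> N \<and> (\<forall>x\<in>S. x \<noteq> t \<longrightarrow> x \<noteq> root \<and> par x \<in> S)"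

lemma conn_N: "conn N root"
  using root_in par_in by (auto simp: conn_def)

lemma conn_up: "conn S t \<Longrightarrow> x \<in> S \<Longrightarrow> \<exists>P. twalk P \<and> hd P = x \<and> last P = t \<and> set P \<subseteq> S"
proof (induction "rk x" arbitrary: x rule: less_induct)
  case less
  show ?case
  proof (cases "x = t")
    case True
    then show ?thesis using less.prems by (rule_tac x="[t]" in exI) (auto simp: twalk_def conn_def)
  next
    case False
    then have xr: "x \<noteq> root" "par x \<in> S" "x \<in> N" using less.prems by (auto simp: conn_def)
    then have "rk (par x) < rk x" using rk_dec by blast
    then obtain P where P: "twalk P" "hd P = par x" "last P = t" "set P \<subseteq> S"
      using less.hyps less.prems(1) xr by blast
    have "twalk (x # P)" using P xr
      by (cases P) (auto simp: twalk_def adj_def up_def)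
    then show ?thesis using P less.prems by (rule_tac x="x # P" in exI) (auto simp: twalk_def)
  qed
qed

lemma twalk_join: "twalk xs \<Longrightarrow> twalk ys \<Longrightarrow> last xs = hd ys \<Longrightarrow> twalk (xs @ tl ys)"
  unfolding twalk_def
  by (cases ys) (auto simp: successively_append_iff successively_Cons)

lemma twalk_rev: "twalk P \<Longrightarrow> twalk (rev P)"
  unfolding twalk_def by (auto simp: intro: successively_mono adj_sym)

lemma conn_nbw: "conn S t \<Longrightarrow> x \<in> S \<Longrightarrow> y \<in> S \<Longrightarrow>
   \<exists>P. nbw P \<and> hd P = x \<and> last P = y \<and> set P \<subseteq> S"
proof -
  assume a: "conn S t" "x \<in> S" "y \<in> S"
  obtain P1 where P1: "twalk P1" "hd P1 = x" "last P1 = t" "set P1 \<subseteq> S" using conn_up a by blast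
  obtain P2 where P2: "twalk P2" "hd P2 = y" "last P2 = t" "set P2 \<subseteq> S" using conn_up a by blast
  have ne: "P1 \<noteq> []" "P2 \<noteq> []" using P1 P2 by (auto simp: twalk_def)
  have "twalk (P1 @ tl (rev P2))" using twalk_join[OF P1(1) twalk_rev[OF P2(1)]] P1 P2 ne
    by (simp add: hd_rev)
  moreover have "hd (P1 @ tl (rev P2)) = x" using P1 ne by simp
  moreover have "last (P1 @ tl (rev P2)) = y"
    using last_join[of P1 "rev P2"] P1 P2 ne by (simp add: hd_rev last_rev)
  moreover have "set (P1 @ tl (rev P2)) \<subseteq> S" using P1 P2 by (auto simp: tl_rev' dest: in_set_butlastD)
  ultimately obtain R where "nbw R" "hd R = x" "last R = y" "set R \<subseteq> S"
    using reduce[of "P1 @ tl (rev P2)"] by blast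
  then show ?thesis by blast
qed

lemma convex: "conn S t \<Longrightarrow> nbw P \<Longrightarrow> hd P \<in> S \<Longrightarrow> last P \<in> S \<Longrightarrow> set P \<subseteq> S"
proof -
  assume a: "conn S t" "nbw P" "hd P \<in> S" "last P \<in> S"
  obtain Q where "nbw Q" "hd Q = hd P" "last Q = last P" "set Q \<subseteq> S"
    using conn_nbw[OF a(1,3,4)] by blast
  moreover then have "Q = P" using nbw_unique a(2) by blast
  ultimately show ?thesis by simp
qed

lemma exists_nbw: "x \<in> N \<Longrightarrow> y \<in> N \<Longrightarrow> \<exists>P. nbw P \<and> hd P = x \<and> last P = y"
  using conn_nbw[OF conn_N] by blast

lemma conv_tl:
  assumes "conn A t" "nbw P" "hd P \<in> A" "2 \<le> length P" "P ! 1 \<notin> A"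
  shows "\<forall>x \<in> set (tl P). x \<notin> A"
proof
  fix x assume "x \<in> set (tl P)"
  then obtain j where j: "1 \<le> j" "j < length P" "x = P ! j"
    by (auto simp: in_tl_nth)
  show "x \<notin> A"
  proof
    assume "x \<in> A"
    have "nbw (take (Suc j) P)" using nbw_take assms(2) by blast
    moreover have "hd (take (Suc j) P) = hd P" using j by (simp add: hd_take)
    moreover have "last (take (Suc j) P) = x" using j by (simp add: take_Suc_conv_app_nth)
    ultimately have "set (take (Suc j) P) \<subseteq> A" using convex assms(1,3) \<open>x \<in> A\<close> by metis
    moreover have "P ! 1 \<in> set (take (Suc j) P)"
    proof -
      have "take (Suc j) P ! 1 = P ! 1" using j by simp
      moreover have "1 < length (take (Suc j) P)" using j by simp
      ultimately show ?thesis by (metis nth_mem)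
    qed
    ultimately show False using assms(5) by auto
  qed
qed

lemma conv_butlast:
  assumes "conn B t" "nbw P" "last P \<in> B" "2 \<le> length P" "P ! (length P - 2) \<notin> B"
  shows "\<forall>x \<in> set (butlast P). x \<notin> B"
proof -
  have "rev P ! 1 = P ! (length P - 2)" using assms(4) by (simp add: rev_nth numeral_2_eq_2)
  then have "\<forall>x \<in> set (tl (rev P)). x \<notin> B"
    using conv_tl[OF assms(1) nbw_rev[OF assms(2)]] assms by (simp add: hd_rev)
  then show ?thesis by (simp add: tl_rev')
qed

definition pb :: "'n set \<Rightarrow> 'n set \<Rightarrow> 'n list \<Rightarrow> bool" where
  "pb A B P \<longleftrightarrow> nbw P \<and> hd P \<in> A \<and> last P \<in> B \<and> (\<forall>x\<in>set (tl P). x \<notin> A)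
     \<and> (\<forall>x\<in>set (butlast P). x \<notin> B)"

lemma pb_len: "pb A B P \<Longrightarrow> A \<inter> B = {} \<Longrightarrow> 2 \<le> length P"
  unfolding pb_def nbw_def twalk_def
  by (cases P) (auto simp: Suc_le_eq)

lemma pb_rev: "pb A B P \<Longrightarrow> pb B A (rev P)"
  unfolding pb_def using nbw_rev
  by (auto simp: hd_rev last_rev tl_rev')

lemma pb_trim: "nbw P \<Longrightarrow> hd P \<in> A \<Longrightarrow> last P \<in> B \<Longrightarrow> \<exists>P'. pb A B P'"
proof (induction "length P" arbitrary: P rule: less_induct)
  case less
  show ?case
  proof (cases "\<exists>x\<in>set (tl P). x \<in> A")
    case True
    then obtain j where j: "1 \<le> j" "j < length P" "P ! j \<in> A"
      by (auto simp: in_tl_nth)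
    have "nbw (drop j P)" using nbw_drop less.prems(1) j by blast
    moreover have "hd (drop j P) \<in> A" using j by (simp add: hd_drop_conv_nth)
    moreover have "last (drop j P) \<in> B" using j less.prems by simp
    moreover have "length (drop j P) < length P" using j by simp
    ultimately show ?thesis using less.hyps by blast
  next
    case F: False
    show ?thesis
    proof (cases "\<exists>x\<in>set (butlast P). x \<in> B")
      case True
      then obtain j where j: "j < length P - 1" "P ! j \<in> B"
        by (auto simp: in_set_conv_nth nth_butlast)
      have "nbw (take (Suc j) P)" using nbw_take less.prems(1) by blast
      moreover have "hd (take (Suc j) P) \<in> A" using less.prems(2) by (simp add: hd_take)
      moreover have "last (take (Suc j) P) \<in> B" using j by (simp add: take_Suc_conv_app_nth)
      moreover have "length (take (Suc j) P) < length P" using j by simp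
      ultimately show ?thesis using less.hyps by blast
    next
      case False
      then show ?thesis using F less.prems by (auto simp: pb_def)
    qed
  qed
qed

lemma pb_exists: "conn A ta \<Longrightarrow> conn B tb \<Longrightarrow> \<exists>P. pb A B P"
proof -
  assume a: "conn A ta" "conn B tb"
  then have "ta \<in> N" "tb \<in> N" by (auto simp: conn_def)
  then obtain P where "nbw P" "hd P = ta" "last P = tb" using exists_nbw by blast
  then show ?thesis using pb_trim a by (auto simp: conn_def)
qed

lemma pb_hd:
  assumes cA: "conn A ta" and cB: "conn B tb" and d: "A \<inter> B = {}"
    and P: "pb A B P" and P': "pb A B P'"
  shows "hd P' = hd P"
proof -
  have lP: "2 \<le> length P" using pb_len P d by blast
  have lP': "2 \<le> length P'" using pb_len P' d by blast
  obtain HA where HA: "nbw HA" "hd HA = hd P'" "last HA = hd P" "set HA \<subseteq> A"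
    using conn_nbw[OF cA] P P' by (meson pb_def)
  obtain HB where HB: "nbw HB" "hd HB = last P" "last HB = last P'" "set HB \<subseteq> B"
    using conn_nbw[OF cB] P P' by (meson pb_def)
  have neHB: "HB \<noteq> []" using HB by (auto simp: nbw_def twalk_def)
  have neHA: "HA \<noteq> []" using HA by (auto simp: nbw_def twalk_def)
  have W1: "nbw (P @ tl HB)"
  proof (rule nbw_join)
    show "nbw P" using P by (simp add: pb_def)
    show "nbw HB" "last P = hd HB" using HB by auto
    assume "2 \<le> length P" "2 \<le> length HB"
    have "P ! (length P - 2) \<in> set (butlast P)" using lP
      by (auto simp: in_set_conv_nth nth_butlast intro!: exI[of _ "length P - 2"])
    then have "P ! (length P - 2) \<notin> B" using P by (auto simp: pb_def)
    moreover have "HB ! 1 \<in> B" using HB(4) \<open>2 \<le> length HB\<close> by (auto simp: subset_iff)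
    ultimately show "P ! (length P - 2) \<noteq> HB ! 1" by auto
  qed
  have W: "nbw (HA @ tl (P @ tl HB))"
  proof (rule nbw_join)
    show "nbw HA" using HA by simp
    show "nbw (P @ tl HB)" by (rule W1)
    show "last HA = hd (P @ tl HB)" using HA lP by (cases P) auto
    assume "2 \<le> length HA" "2 \<le> length (P @ tl HB)"
    have "HA ! (length HA - 2) \<in> A" using HA(4) \<open>2 \<le> length HA\<close> by (auto simp: subset_iff)
    moreover have "(P @ tl HB) ! 1 = P ! 1" using lP by (simp add: nth_append)
    moreover have "P ! 1 \<in> set (tl P)" using lP by (auto simp: in_set_conv_nth nth_tl intro!: exI[of _ 0])
    then have "P ! 1 \<notin> A" using P by (auto simp: pb_def)
    ultimately show "HA ! (length HA - 2) \<noteq> (P @ tl HB) ! 1" by auto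
  qed
  have "hd (HA @ tl (P @ tl HB)) = hd P'" using HA neHA by simp
  moreover have "last (HA @ tl (P @ tl HB)) = last P'"
  proof -
    have "last (P @ tl HB) = last HB" using last_join[of P HB] HB(2) neHB by simp
    moreover have "last (HA @ tl (P @ tl HB)) = last (P @ tl HB)"
      using last_join[of HA "P @ tl HB"] HA lP by (cases P) auto
    ultimately show ?thesis using HB by simp
  qed
  moreover have "nbw P'" using P' by (simp add: pb_def)
  ultimately have eq: "HA @ tl (P @ tl HB) = P'" using nbw_unique W by blast
  show ?thesis
  proof (rule ccontr)
    assume "hd P' \<noteq> hd P"
    then have "length HA \<noteq> 1" using HA len1 by (metis last_ConsL list.sel(1))
    then have "2 \<le> length HA" using neHA by (cases HA) (auto simp: Suc_le_eq)
    then have "P' ! 1 = HA ! 1" using eq[symmetric] by (simp add: nth_append)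
    moreover have "HA ! 1 \<in> A" using HA(4) \<open>2 \<le> length HA\<close> by (auto simp: subset_iff)
    moreover have "P' ! 1 \<in> set (tl P')" using lP' by (auto simp: in_set_conv_nth nth_tl intro!: exI[of _ 0])
    ultimately show False using P' by (auto simp: pb_def)
  qed
qed

lemma pb_unique:
  assumes "conn A ta" "conn B tb" "A \<inter> B = {}" "pb A B P" "pb A B P'"
  shows "P = P'"
proof -
  have "hd P' = hd P" using pb_hd assms by blast
  moreover have "hd (rev P') = hd (rev P)"
    using pb_hd[OF assms(2,1) _ pb_rev[OF assms(4)] pb_rev[OF assms(5)]] assms(3) by blast
  ultimately show ?thesis using nbw_unique assms(4,5)
    by (metis pb_def hd_rev)
qed

end



locale stk =
  fixes X :: "'a set set" and d :: nat and L :: "'a set list"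
  assumes pure: "pure X d" and Lne: "L \<noteq> []" and Ldist: "distinct L"
    and Lset: "set L = facets X"
    and Lstack: "\<And>p. 1 \<le> p \<Longrightarrow> p < length L \<Longrightarrow>
        \<exists>v. L ! p - (\<Union>j<p. L ! j) = {v} \<and> (\<exists>j<p. L ! p - {v} \<subseteq> L ! j)"
begin

definition Rid where "Rid = {r. card r = d \<and> (\<exists>f\<in>facets X. r \<subseteq> f)}"
definition NN where "NN = facets X \<union> Rid"
definition idx where "idx f = (THE i. i < length L \<and> L ! i = f)"
definition nv where "nv p = (THE v. L ! p - (\<Union>j<p. L ! j) = {v})"
definition first where "first r = (LEAST j. j < length L \<and> r \<subseteq> L ! j)"
definition par where "par x = (if x \<in> facets X then L ! (idx x) - {nv (idx x)} else L ! (first x))"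
definition rk where "rk x = (if x \<in> facets X then 2 * idx x else 2 * first x + 1)"

lemma fac_card: "f \<in> facets X \<Longrightarrow> card f = d + 1"
  using pure by (auto simp: pure_def)

lemma fac_fin: "f \<in> facets X \<Longrightarrow> finite f"
  using fac_card card.infinite by fastforce

lemma L_facet: "p < length L \<Longrightarrow> L ! p \<in> facets X"
  using Lset nth_mem by blast

lemma idx: "f \<in> facets X \<Longrightarrow> idx f < length L \<and> L ! (idx f) = f"
proof -
  assume "f \<in> facets X"
  then obtain i where i: "i < length L" "L ! i = f" using Lset by (metis in_set_conv_nth)
  have "idx f = i" unfolding idx_def
    by (rule the_equality) (use i Ldist nth_eq_iff_index_eq in auto)
  then show ?thesis using i by simp
qed

lemma idx_nth: "p < length L \<Longrightarrow> idx (L ! p) = p"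
proof -
  assume p: "p < length L"
  have "idx (L ! p) < length L \<and> L ! (idx (L ! p)) = L ! p" using idx[OF L_facet[OF p]] .
  then show ?thesis using p nth_eq_iff_index_eq[OF Ldist, of "idx (L ! p)" p] by simp
qed

lemma nv: "1 \<le> p \<Longrightarrow> p < length L \<Longrightarrow> L ! p - (\<Union>j<p. L ! j) = {nv p} \<and> (\<exists>j<p. L ! p - {nv p} \<subseteq> L ! j)"
proof -
  assume a: "1 \<le> p" "p < length L"
  obtain v where v0: "L ! p - (\<Union>j<p. L ! j) = {v} \<and> (\<exists>j<p. L ! p - {v} \<subseteq> L ! j)"
    using Lstack[OF a] by (rule exE)
  then have v: "L ! p - (\<Union>j<p. L ! j) = {v}" "\<exists>j<p. L ! p - {v} \<subseteq> L ! j" by simp_all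
  have "nv p = v" unfolding nv_def
  proof (rule the_equality)
    show "L ! p - (\<Union>j<p. L ! j) = {v}" by (rule v(1))
    fix x assume "L ! p - (\<Union>j<p. L ! j) = {x}"
    then show "x = v" using v(1) by simp
  qed
  then show ?thesis using v by simp
qed

lemma nv_mem: "1 \<le> p \<Longrightarrow> p < length L \<Longrightarrow> nv p \<in> L ! p - (\<Union>j<p. L ! j)"
proof -
  assume a: "1 \<le> p" "p < length L"
  have "L ! p - (\<Union>j<p. L ! j) = {nv p}" using nv[OF a] by (rule conjunct1)
  then show ?thesis by (metis insertI1)
qed

lemma nv_in: "1 \<le> p \<Longrightarrow> p < length L \<Longrightarrow> nv p \<in> L ! p"
  using nv_mem by (metis DiffD1)

lemma nv_notin: "1 \<le> p \<Longrightarrow> p < length L \<Longrightarrow> j < p \<Longrightarrow> nv p \<notin> L ! j"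
proof -
  assume a: "1 \<le> p" "p < length L" "j < p"
  have "nv p \<notin> (\<Union>j<p. L ! j)" using nv_mem[OF a(1,2)] by (metis DiffD2)
  then show ?thesis using a(3) by blast
qed

lemma Rid_not_fac: "r \<in> Rid \<Longrightarrow> r \<notin> facets X"
proof
  assume "r \<in> Rid" "r \<in> facets X"
  then have "card r = d" "card r = d + 1" using fac_card by (auto simp: Rid_def)
  then show False by simp
qed

lemma Rid_fin: "r \<in> Rid \<Longrightarrow> finite r"
proof -
  assume "r \<in> Rid"
  then obtain f where "f \<in> facets X" "r \<subseteq> f" by (auto simp: Rid_def)
  then show ?thesis using finite_subset fac_fin by metis
qed

lemma first: "r \<in> Rid \<Longrightarrow> first r < length L \<and> r \<subseteq> L ! (first r)"
proof -
  assume "r \<in> Rid"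
  then obtain f where f: "f \<in> facets X" "r \<subseteq> f" by (auto simp: Rid_def)
  define i where "i = idx f"
  have i: "i < length L" "r \<subseteq> L ! i" using idx[OF f(1)] f(2) i_def by auto
  have "(LEAST j. j < length L \<and> r \<subseteq> L ! j) < length L \<and> r \<subseteq> L ! (LEAST j. j < length L \<and> r \<subseteq> L ! j)"
    by (rule LeastI[of "\<lambda>j. j < length L \<and> r \<subseteq> L ! j"]) (use i in simp)
  then show ?thesis unfolding first_def .
qed

lemma first_le: "j < length L \<Longrightarrow> r \<subseteq> L ! j \<Longrightarrow> first r \<le> j"
  unfolding first_def by (rule Least_le) simp

lemma R_card: "f \<in> facets X \<Longrightarrow> idx f \<ge> 1 \<Longrightarrow> card (f - {nv (idx f)}) = d"
  using idx[of f] nv_in[of "idx f"] fac_card fac_fin by (auto simp: card_Diff_singleton)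

lemma par_fac: "f \<in> facets X \<Longrightarrow> f \<noteq> L ! 0 \<Longrightarrow> idx f \<ge> 1 \<and> par f = f - {nv (idx f)} \<and> par f \<in> Rid
   \<and> first (par f) < idx f"
proof -
  assume f: "f \<in> facets X" "f \<noteq> L ! 0"
  have "idx f \<noteq> 0"
  proof
    assume "idx f = 0"
    then have "f = L ! 0" using idx[OF f(1)] by simp
    then show False using f(2) by simp
  qed
  then have i1: "idx f \<ge> 1" by simp
  have pf: "par f = f - {nv (idx f)}" using f idx unfolding par_def by simp
  have "par f \<in> Rid" using R_card[OF f(1) i1] pf f(1) by (auto simp: Rid_def)
  moreover obtain j where j: "j < idx f" "L ! idx f - {nv (idx f)} \<subseteq> L ! j"
    using nv[OF i1] idx f by blast
  moreover have "j < length L" using j(1) idx[OF f(1)] by simp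
  moreover have "par f \<subseteq> L ! j" using j(2) pf idx[OF f(1)] by simp
  ultimately have "first (par f) < idx f" using first_le[of j "par f"] by simp
  then show ?thesis using i1 pf \<open>par f \<in> Rid\<close> by simp
qed

lemma par_rid: "r \<in> Rid \<Longrightarrow> par r = L ! first r"
  using Rid_not_fac par_def by auto

sublocale rtree NN "L ! 0" par rk
proof
  show "L ! 0 \<in> NN" using L_facet Lne by (simp add: NN_def)
next
  fix x assume x: "x \<in> NN" "x \<noteq> L ! 0"
  show "par x \<in> NN"
  proof (cases "x \<in> facets X")
    case True
    then have "par x \<in> Rid" using par_fac[OF True x(2)] by blast
    then show ?thesis by (simp add: NN_def)
  next
    case False then have "x \<in> Rid" using x by (simp add: NN_def)
    then show ?thesis using par_rid first L_facet by (simp add: NN_def)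
  qed
  show "rk (par x) < rk x"
  proof (cases "x \<in> facets X")
    case True
    then have "par x \<in> Rid" "first (par x) < idx x" using par_fac[OF True x(2)] by blast+
    then show ?thesis using True Rid_not_fac by (simp add: rk_def)
  next
    case False then have r: "x \<in> Rid" using x by (simp add: NN_def)
    then have "par x \<in> facets X" "idx (par x) = first x"
      using par_rid first L_facet idx_nth by auto
    then show ?thesis using False by (simp add: rk_def)
  qed
qed

lemma up_cases: "up x y \<Longrightarrow> (x \<in> facets X \<and> y \<in> Rid \<and> y \<subseteq> x) \<or> (x \<in> Rid \<and> y \<in> facets X \<and> x \<subseteq> y)"
proof -
  assume u: "up x y"
  then have x: "x \<in> NN" "x \<noteq> L ! 0" "y = par x" by (auto simp: up_def)
  show ?thesis
  proof (cases "x \<in> facets X")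
    case True
    have "par x \<in> Rid" "par x = x - {nv (idx x)}" using par_fac[OF True x(2)] by blast+
    then show ?thesis using True x(3) by auto
  next
    case False then have "x \<in> Rid" using x by (simp add: NN_def)
    then have "par x = L ! first x" "first x < length L" "x \<subseteq> L ! first x" using par_rid first by auto
    then show ?thesis using \<open>x \<in> Rid\<close> L_facet x(3) by auto
  qed
qed

lemma fr_adj: "f \<in> facets X \<Longrightarrow> r \<in> Rid \<Longrightarrow> r \<subseteq> f \<Longrightarrow> up f r \<or> up r f"
proof -
  assume a: "f \<in> facets X" "r \<in> Rid" "r \<subseteq> f"
  define p where "p = idx f"
  have p: "p < length L" "L ! p = f" using idx a(1) p_def by auto
  have fle: "first r \<le> p" using first_le p a(3) by simp
  show ?thesis
  proof (cases "first r = p")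
    case True
    then have "par r = f" using par_rid a(2) p by simp
    moreover have "r \<noteq> L ! 0" using a(2) Rid_not_fac L_facet Lne by auto
    ultimately have "up r f" unfolding up_def using a(2) by (simp add: NN_def)
    then show ?thesis by simp
  next
    case False
    then have lt: "first r < p" using fle by simp
    have f0: "f \<noteq> L ! 0" using lt p Ldist nth_eq_iff_index_eq by (metis less_nat_zero_code not_less_zero length_greater_0_conv Lne)
    have pf0: "idx f \<ge> 1 \<and> par f = f - {nv (idx f)} \<and> par f \<in> Rid \<and> first (par f) < idx f"
      using par_fac[OF a(1) f0] .
    then have pf: "idx f \<ge> 1" "par f = f - {nv p}" "par f \<in> Rid" using p_def by metis+
    have "nv p \<notin> r" using nv_notin[OF pf(1)[folded p_def] p(1) lt] first a(2) by blast
    then have "r \<subseteq> par f" using a(3) pf by auto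
    moreover have "card r = card (par f)" using a(2) pf(3) by (simp add: Rid_def)
    moreover have "finite (par f)" using Rid_fin pf(3) by blast
    ultimately have "r = par f" by (simp add: card_subset_eq)
    then have "up f r" unfolding up_def using f0 a(1) by (simp add: NN_def)
    then show ?thesis by simp
  qed
qed

lemma adj_iff: "adj x y \<longleftrightarrow> (x \<in> facets X \<and> y \<in> Rid \<and> y \<subseteq> x) \<or> (y \<in> facets X \<and> x \<in> Rid \<and> x \<subseteq> y)"
  using up_cases fr_adj unfolding adj_def by metis

definition TT where "TT a = {x \<in> NN. a \<in> x}"
definition fa where "fa a = (LEAST j. j < length L \<and> a \<in> L ! j)"

lemma conn_TT: assumes "a \<in> \<Union>(facets X)" shows "conn (TT a) (L ! fa a)"
proof -
  obtain i where i: "i < length L" "a \<in> L ! i" using assms idx by (metis UnionE)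
  have "(LEAST j. j < length L \<and> a \<in> L ! j) < length L \<and> a \<in> L ! (LEAST j. j < length L \<and> a \<in> L ! j)"
    by (rule LeastI[of "\<lambda>j. j < length L \<and> a \<in> L ! j"]) (use i in simp)
  then have fa: "fa a < length L" "a \<in> L ! fa a" unfolding fa_def by auto
  have fa_le: "\<And>j. j < length L \<Longrightarrow> a \<in> L ! j \<Longrightarrow> fa a \<le> j"
    unfolding fa_def by (rule Least_le) simp
  show ?thesis unfolding conn_def
  proof (intro conjI)
    show "L ! fa a \<in> TT a" using fa L_facet by (simp add: TT_def NN_def)
    show "TT a \<subseteq> NN" by (auto simp: TT_def)
    show "\<forall>x\<in>TT a. x \<noteq> L ! fa a \<longrightarrow> x \<noteq> L ! 0 \<and> par x \<in> TT a"
    proof (intro ballI impI)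
    fix x assume x: "x \<in> TT a" "x \<noteq> L ! fa a"
    show "x \<noteq> L ! 0 \<and> par x \<in> TT a"
    proof (cases "x \<in> facets X")
      case True
      define p where "p = idx x"
      have p: "p < length L" "L ! p = x" using idx True p_def by auto
      have "fa a \<le> p" using fa_le p x by (auto simp: TT_def)
      then have lt: "fa a < p" using x p by (metis le_neq_implies_less)
      then have x0: "x \<noteq> L ! 0"
        using p Ldist nth_eq_iff_index_eq Lne by (metis less_nat_zero_code length_greater_0_conv)
      have pf0: "idx x \<ge> 1 \<and> par x = x - {nv (idx x)} \<and> par x \<in> Rid \<and> first (par x) < idx x"
        using par_fac[OF True x0] .
      then have pf: "idx x \<ge> 1" "par x = x - {nv p}" "par x \<in> Rid" using p_def by metis+
      have "nv p \<noteq> a" using nv_notin[OF pf(1)[folded p_def] p(1) lt] fa by blast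
      then show ?thesis using x0 pf x by (auto simp: TT_def NN_def)
    next
      case False
      then have r: "x \<in> Rid" using x by (auto simp: TT_def NN_def)
      then have "par x \<in> facets X" "x \<subseteq> par x" using par_rid first L_facet by auto
      moreover have "x \<noteq> L ! 0" using False L_facet Lne by auto
      ultimately show ?thesis using x by (auto simp: TT_def NN_def)
    qed
    qed
  qed
qed

end



fun nodes :: "'a set list \<Rightarrow> 'a set list" where
  "nodes [] = []"
| "nodes [f] = [f]"
| "nodes (f # g # r) = f # (f \<inter> g) # nodes (g # r)"

lemma nodes_len: "fs \<noteq> [] \<Longrightarrow> length (nodes fs) = 2 * length fs - 1"
  by (induction fs rule: nodes.induct) auto

lemma nodes_ne: "fs \<noteq> [] \<Longrightarrow> nodes fs \<noteq> []"
  by (induction fs rule: nodes.induct) auto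

lemma nodes_even: "i < length fs \<Longrightarrow> nodes fs ! (2 * i) = fs ! i"
proof (induction fs arbitrary: i rule: nodes.induct)
  case (3 f g r)
  then show ?case by (cases i) auto
qed auto

lemma nodes_odd: "i + 1 < length fs \<Longrightarrow> nodes fs ! (2 * i + 1) = fs ! i \<inter> fs ! (i + 1)"
proof (induction fs arbitrary: i rule: nodes.induct)
  case (3 f g r)
  then show ?case by (cases i) auto
qed auto

lemma nodes_hd: "fs \<noteq> [] \<Longrightarrow> hd (nodes fs) = hd fs"
  by (induction fs rule: nodes.induct) auto

lemma nodes_last: "fs \<noteq> [] \<Longrightarrow> last (nodes fs) = last fs"
  by (induction fs rule: nodes.induct) (auto simp: nodes_ne)

lemma nbk_nth: "nbk P \<longleftrightarrow> (\<forall>i. i + 2 < length P \<longrightarrow> P ! i \<noteq> P ! (i + 2))"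
proof (induction P rule: nbk.induct)
  case (1 x y z r)
  show ?case
  proof
    assume a: "nbk (x # y # z # r)"
    show "\<forall>i. i + 2 < length (x # y # z # r) \<longrightarrow> (x # y # z # r) ! i \<noteq> (x # y # z # r) ! (i + 2)"
    proof (intro allI impI)
      fix i assume "i + 2 < length (x # y # z # r)"
      then show "(x # y # z # r) ! i \<noteq> (x # y # z # r) ! (i + 2)"
        using a 1 by (cases i) auto
    qed
  next
    assume a: "\<forall>i. i + 2 < length (x # y # z # r) \<longrightarrow> (x # y # z # r) ! i \<noteq> (x # y # z # r) ! (i + 2)"
    have "x \<noteq> z" using a[rule_format, of 0] by simp
    moreover have "\<forall>i. i + 2 < length (y # z # r) \<longrightarrow> (y # z # r) ! i \<noteq> (y # z # r) ! (i + 2)"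
      using a by (auto dest: spec[of _ "Suc _"])
    ultimately show "nbk (x # y # z # r)" using 1 by simp
  qed
qed (auto simp: less_Suc_eq)

lemma in_mid_nth: "x \<in> set (butlast (tl P)) \<longleftrightarrow> (\<exists>j. 1 \<le> j \<and> j + 1 < length P \<and> P ! j = x)"
proof
  assume "x \<in> set (butlast (tl P))"
  then obtain j where j: "j + 1 < length (tl P)" "tl P ! j = x" unfolding in_butlast_nth by blast
  then show "\<exists>j. 1 \<le> j \<and> j + 1 < length P \<and> P ! j = x"
    by (rule_tac x="Suc j" in exI) (auto simp: nth_tl)
next
  assume "\<exists>j. 1 \<le> j \<and> j + 1 < length P \<and> P ! j = x"
  then obtain j where j: "1 \<le> j" "j + 1 < length P" "P ! j = x" by blast
  then obtain i where i: "j = Suc i" by (cases j) auto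
  have "i + 1 < length (tl P)" "tl P ! i = x" using j i by (auto simp: nth_tl)
  then show "x \<in> set (butlast (tl P))" unfolding in_butlast_nth by blast
qed

lemma parity: "\<exists>i. (j::nat) = 2 * i \<or> j = 2 * i + 1"
  by presburger

context stk
begin

lemma walk_D: "walk X d fs \<Longrightarrow> i + 1 < length fs \<Longrightarrow> card (fs ! i \<inter> fs ! (i + 1)) = d"
  by (simp add: walk_def)

lemma walk_fac: "walk X d fs \<Longrightarrow> i < length fs \<Longrightarrow> fs ! i \<in> facets X"
  by (auto simp: walk_def)

lemma inter_Rid: "walk X d fs \<Longrightarrow> i + 1 < length fs \<Longrightarrow> fs ! i \<inter> fs ! (i + 1) \<in> Rid"
  using walk_D[of fs i] walk_fac[of fs i] by (auto simp: Rid_def)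

lemma walk_twalk: "walk X d fs \<Longrightarrow> twalk (nodes fs)"
proof -
  assume w: "walk X d fs"
  then have ne: "fs \<noteq> []" by (simp add: walk_def)
  have len: "length (nodes fs) = 2 * length fs - 1" using nodes_len ne by blast
  have inN: "\<And>j. j < length (nodes fs) \<Longrightarrow> nodes fs ! j \<in> NN"
  proof -
    fix j assume j: "j < length (nodes fs)"
    obtain i where "j = 2 * i \<or> j = 2 * i + 1" using parity by blast
    then show "nodes fs ! j \<in> NN"
    proof
      assume "j = 2 * i"
      then show ?thesis using j len nodes_even[of i fs] walk_fac[OF w, of i] by (simp add: NN_def)
    next
      assume "j = 2 * i + 1"
      then show ?thesis using j len nodes_odd[of i fs] inter_Rid[OF w, of i] by (simp add: NN_def)
    qed
  qed
  have ad: "\<And>j. Suc j < length (nodes fs) \<Longrightarrow> adj (nodes fs ! j) (nodes fs ! Suc j)"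
  proof -
    fix j assume j: "Suc j < length (nodes fs)"
    obtain i where "j = 2 * i \<or> j = 2 * i + 1" using parity by blast
    then show "adj (nodes fs ! j) (nodes fs ! Suc j)"
    proof
      assume ji: "j = 2 * i"
      then have i1: "i + 1 < length fs" using j len by simp
      have "nodes fs ! j = fs ! i" using ji nodes_even[of i fs] i1 by simp
      moreover have "nodes fs ! Suc j = fs ! i \<inter> fs ! (i + 1)" using ji nodes_odd[of i fs] i1 by simp
      ultimately show ?thesis using adj_iff inter_Rid[OF w i1] walk_fac[OF w, of i] i1 by auto
    next
      assume ji: "j = 2 * i + 1"
      then have i1: "i + 1 < length fs" using j len by simp
      have "nodes fs ! j = fs ! i \<inter> fs ! (i + 1)" using ji nodes_odd[of i fs] i1 by simp
      moreover have "nodes fs ! Suc j = fs ! (i + 1)" using ji nodes_even[of "i + 1" fs] i1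
        by (simp add: algebra_simps)
      ultimately show ?thesis using adj_iff inter_Rid[OF w i1] walk_fac[OF w, of "i + 1"] i1 by auto
    qed
  qed
  show ?thesis unfolding twalk_def
    using nodes_ne[OF ne] inN ad by (auto simp: successively_conv_nth in_set_conv_nth)
qed

lemma path_nbw: "path X d fs \<Longrightarrow> nbw (nodes fs)"
proof -
  assume p: "path X d fs"
  then have w: "walk X d fs" and ds: "distinct (map (\<lambda>i. fs ! i \<inter> fs ! (i + 1)) [0..<length fs - 1])"
    by (auto simp: path_def)
  then have ne: "fs \<noteq> []" by (simp add: walk_def)
  have len: "length (nodes fs) = 2 * length fs - 1" using nodes_len ne by blast
  have "nbk (nodes fs)" unfolding nbk_nth
  proof (intro allI impI)
    fix j assume j: "j + 2 < length (nodes fs)"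
    obtain i where "j = 2 * i \<or> j = 2 * i + 1" using parity by blast
    then show "nodes fs ! j \<noteq> nodes fs ! (j + 2)"
    proof
      assume ji: "j = 2 * i"
      then have i1: "i + 1 < length fs" using j len by simp
      have "nodes fs ! j = fs ! i" using ji nodes_even[of i fs] i1 by simp
      moreover have "nodes fs ! (j + 2) = fs ! (i + 1)" using ji nodes_even[of "i + 1" fs] i1
        by (simp add: algebra_simps)
      moreover have "fs ! i \<noteq> fs ! (i + 1)"
      proof
        assume "fs ! i = fs ! (i + 1)"
        then have "card (fs ! i \<inter> fs ! (i + 1)) = d + 1" using fac_card walk_fac[OF w, of i] i1 by simp
        then show False using walk_D[OF w i1] by simp
      qed
      ultimately show ?thesis by simp
    next
      assume ji: "j = 2 * i + 1"
      then have i2: "i + 2 < length fs" using j len by simp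
      have "nodes fs ! j = fs ! i \<inter> fs ! (i + 1)" using ji nodes_odd[of i fs] i2 by simp
      moreover have "nodes fs ! (j + 2) = fs ! (i + 1) \<inter> fs ! (i + 2)" using ji nodes_odd[of "i + 1" fs] i2
        by (simp add: algebra_simps)
      moreover have "fs ! i \<inter> fs ! (i + 1) \<noteq> fs ! (i + 1) \<inter> fs ! (i + 2)"
      proof
        assume e: "fs ! i \<inter> fs ! (i + 1) = fs ! (i + 1) \<inter> fs ! (i + 2)"
        define g where "g = (\<lambda>i. fs ! i \<inter> fs ! (i + 1))"
        have dd: "\<forall>a<length (map g [0..<length fs - 1]). \<forall>b<length (map g [0..<length fs - 1]).
            a \<noteq> b \<longrightarrow> map g [0..<length fs - 1] ! a \<noteq> map g [0..<length fs - 1] ! b"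
          using ds unfolding g_def by (simp only: distinct_conv_nth)
        have "map g [0..<length fs - 1] ! i \<noteq> map g [0..<length fs - 1] ! (i + 1)"
          using dd[rule_format, of i "i + 1"] i2 by simp
        then have "g i \<noteq> g (i + 1)" using i2 by simp
        then have False using e unfolding g_def by (simp add: algebra_simps)
        then show False by simp
      qed
      ultimately show ?thesis by simp
    qed
  qed
  then show ?thesis using walk_twalk[OF w] by (simp add: nbw_def)
qed

lemma walk_tl: "walk X d (f # g # r) \<Longrightarrow> walk X d (g # r)"
  unfolding walk_def by (auto dest: spec[of _ "Suc _"])

lemma filter_nodes: "walk X d fs \<Longrightarrow> filter (\<lambda>x. x \<in> facets X) (nodes fs) = fs"
proof (induction fs rule: nodes.induct)
  case (2 f) then show ?case by (simp add: walk_def)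
next
  case (3 f g r)
  have "f \<inter> g \<in> Rid" using inter_Rid[OF 3(2), of 0] by simp
  then have "f \<inter> g \<notin> facets X" using Rid_not_fac by blast
  moreover have "f \<in> facets X" using walk_fac[OF 3(2), of 0] by simp
  ultimately show ?case using 3 walk_tl by auto
qed simp

lemma inter_ridge:
  assumes "f \<in> facets X" "g \<in> facets X" "f \<noteq> g" "r \<in> Rid" "r \<subseteq> f" "r \<subseteq> g"
  shows "f \<inter> g = r"
proof -
  have fin: "finite f" using fac_fin assms(1) by blast
  have "f \<inter> g \<noteq> f"
  proof
    assume "f \<inter> g = f"
    then have "f \<subseteq> g" by blast
    moreover have "card f = card g" using fac_card assms(1,2) by simp
    moreover have "finite g" using fac_fin assms(2) by blast
    ultimately show False using assms(3) card_subset_eq by blast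
  qed
  then have "f \<inter> g \<subset> f" by blast
  then have "card (f \<inter> g) < card f" using fin psubset_card_mono by blast
  then have "card (f \<inter> g) \<le> card r" using fac_card assms(1,4) by (simp add: Rid_def)
  moreover have "r \<subseteq> f \<inter> g" using assms by blast
  moreover have "finite (f \<inter> g)" using fin by simp
  ultimately show ?thesis using card_seteq by blast
qed

lemma alternate:
  assumes "twalk P" "hd P \<in> facets X"
  shows "j < length P \<Longrightarrow> (P ! j \<in> facets X \<longleftrightarrow> even j)"
proof (induction j)
  case 0
  then show ?case using assms by (simp add: hd_conv_nth twalk_def)
next
  case (Suc j)
  have "adj (P ! j) (P ! Suc j)" using assms(1) Suc.prems by (simp add: twalk_def successively_conv_nth)
  then have "P ! j \<in> facets X \<longleftrightarrow> P ! Suc j \<notin> facets X" using adj_iff Rid_not_fac by blast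
  then show ?case using Suc by simp
qed

lemma conv_C1:
  assumes P: "nbw P" and h: "hd P \<in> facets X" and l: "last P \<in> facets X"
  shows "\<exists>fs. nodes fs = P \<and> path X d fs"
proof -
  have tw: "twalk P" using P by (simp add: nbw_def)
  have ne: "P \<noteq> []" using tw by (simp add: twalk_def)
  have alt: "\<And>j. j < length P \<Longrightarrow> (P ! j \<in> facets X \<longleftrightarrow> even j)" using alternate tw h by blast
  have "even (length P - 1)" using alt[of "length P - 1"] l ne by (simp add: last_conv_nth)
  then obtain k where k: "length P - 1 = 2 * k" by (elim evenE)
  define n where "n = k + 1"
  have n: "length P = 2 * n - 1" "n \<ge> 1" using k ne unfolding n_def by (cases P) auto
  define fs where "fs = map (\<lambda>i. P ! (2 * i)) [0..<n]"
  have lfs: "length fs = n" by (simp add: fs_def)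
  have fsi: "\<And>i. i < n \<Longrightarrow> fs ! i = P ! (2 * i)" by (simp add: fs_def)
  have fsF: "\<And>i. i < n \<Longrightarrow> fs ! i \<in> facets X" using fsi alt n by simp
  have dist: "distinct P" using nbw_distinct P by blast
  have mid: "\<And>i. i + 1 < n \<Longrightarrow> P ! (2 * i + 1) = fs ! i \<inter> fs ! (i + 1) \<and> P ! (2 * i + 1) \<in> Rid"
  proof -
    fix i assume i: "i + 1 < n"
    have r: "P ! (2 * i + 1) \<notin> facets X" "P ! (2 * i + 1) \<in> NN"
      using alt[of "2 * i + 1"] n i tw by (auto simp: twalk_def)
    then have rR: "P ! (2 * i + 1) \<in> Rid" by (simp add: NN_def)
    have a1: "adj (P ! (2 * i)) (P ! (2 * i + 1))" using tw n i by (simp add: twalk_def successively_conv_nth)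
    have a2: "adj (P ! (2 * i + 1)) (P ! (2 * i + 2))" using tw n i
      by (simp add: twalk_def successively_conv_nth)
    have s1: "P ! (2 * i + 1) \<subseteq> fs ! i" using a1 adj_iff rR Rid_not_fac fsi i by auto
    have s2: "P ! (2 * i + 1) \<subseteq> fs ! (i + 1)" using a2 adj_iff rR Rid_not_fac fsi[of "i + 1"] i
      by (auto simp: algebra_simps)
    have "fs ! i \<noteq> fs ! (i + 1)" using dist fsi[of i] fsi[of "i + 1"] i n
      by (simp add: nth_eq_iff_index_eq algebra_simps)
    then have "fs ! i \<inter> fs ! (i + 1) = P ! (2 * i + 1)"
      using inter_ridge fsF i rR s1 s2 by simp
    then show "P ! (2 * i + 1) = fs ! i \<inter> fs ! (i + 1) \<and> P ! (2 * i + 1) \<in> Rid" using rR by simp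
  qed
  have "nodes fs = P"
  proof (rule nth_equalityI)
    have fne: "fs \<noteq> []" using lfs n by auto
    show "length (nodes fs) = length P" using nodes_len[OF fne] lfs n by simp
    fix j assume j: "j < length (nodes fs)"
    then have j': "j < 2 * n - 1" using nodes_len[OF fne] lfs n by simp
    obtain i where "j = 2 * i \<or> j = 2 * i + 1" using parity by blast
    then show "nodes fs ! j = P ! j"
    proof
      assume "j = 2 * i" then show ?thesis using nodes_even[of i fs] lfs fsi j' by simp
    next
      assume "j = 2 * i + 1" then show ?thesis using nodes_odd[of i fs] lfs mid j' by simp
    qed
  qed
  moreover have "path X d fs"
  proof -
    have "walk X d fs" unfolding walk_def
    proof (intro conjI allI impI)
      show "fs \<noteq> []" using lfs n by auto
      show "set fs \<subseteq> facets X" using fsF lfs by (auto simp: in_set_conv_nth)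
      fix i assume i: "i + 1 < length fs"
      have "i + 1 < n" using i lfs by simp
      from mid[OF this] have "fs ! i \<inter> fs ! (i + 1) \<in> Rid" by metis
      then show "card (fs ! i \<inter> fs ! (i + 1)) = d" by (simp add: Rid_def)
    qed
    moreover have "distinct (map (\<lambda>i. fs ! i \<inter> fs ! (i + 1)) [0..<length fs - 1])"
    proof -
      have "map (\<lambda>i. fs ! i \<inter> fs ! (i + 1)) [0..<length fs - 1] = map (\<lambda>i. P ! (2 * i + 1)) [0..<length fs - 1]"
        using mid lfs by auto
      moreover have "distinct (map (\<lambda>i. P ! (2 * i + 1)) [0..<length fs - 1])"
        unfolding distinct_map
      proof
        show "inj_on (\<lambda>i. P ! (2 * i + 1)) (set [0..<length fs - 1])"
          unfolding inj_on_def using dist lfs n by (auto simp: nth_eq_iff_index_eq)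
      qed simp
      ultimately show ?thesis by metis
    qed
    ultimately show ?thesis by (simp add: path_def)
  qed
  ultimately show ?thesis by blast
qed

end



context stk
begin

lemma nbw_NN: "nbw P \<Longrightarrow> x \<in> set P \<Longrightarrow> x \<in> NN"
  by (auto simp: nbw_def twalk_def)

lemma TT_disj: "\<not> (\<exists>F\<in>facets X. a \<in> F \<and> b \<in> F) \<Longrightarrow> TT a \<inter> TT b = {}"
proof (rule ccontr)
  assume n: "\<not> (\<exists>F\<in>facets X. a \<in> F \<and> b \<in> F)" and "TT a \<inter> TT b \<noteq> {}"
  then obtain x where x: "x \<in> NN" "a \<in> x" "b \<in> x" by (auto simp: TT_def)
  show False
  proof (cases "x \<in> facets X")
    case True then show False using n x by blast
  next
    case False
    then have "x \<in> Rid" using x by (simp add: NN_def)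
    then obtain f where "f \<in> facets X" "x \<subseteq> f" by (auto simp: Rid_def)
    then show False using n x by blast
  qed
qed

lemma pb_hd_fac:
  assumes "pb (TT a) (TT b) P" "TT a \<inter> TT b = {}"
  shows "hd P \<in> facets X"
proof (rule ccontr)
  assume nf: "hd P \<notin> facets X"
  have l: "2 \<le> length P" using pb_len assms by blast
  have nb: "nbw P" using assms(1) by (simp add: pb_def)
  have hT: "hd P \<in> TT a" using assms(1) by (simp add: pb_def)
  have "adj (P ! 0) (P ! 1)" using nb l by (simp add: nbw_def twalk_def successively_conv_nth)
  moreover have "P ! 0 = hd P" using l by (cases P) auto
  ultimately have "P ! 1 \<in> facets X" "hd P \<subseteq> P ! 1" using adj_iff nf by auto
  then have "P ! 1 \<in> TT a" using hT by (auto simp: TT_def NN_def)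
  moreover have "P ! 1 \<in> set (tl P)" unfolding in_tl_nth using l by (rule_tac x=1 in exI) simp
  ultimately show False using assms(1) by (auto simp: pb_def)
qed

lemma pb_last_fac:
  assumes "pb (TT a) (TT b) P" "TT a \<inter> TT b = {}"
  shows "last P \<in> facets X"
proof -
  have "pb (TT b) (TT a) (rev P)" using pb_rev assms(1) by blast
  moreover have "TT b \<inter> TT a = {}" using assms(2) by blast
  ultimately have "hd (rev P) \<in> facets X" using pb_hd_fac by blast
  then show ?thesis by (simp add: hd_rev)
qed

lemma path_walk: "path X d fs \<Longrightarrow> walk X d fs" by (simp add: path_def)

lemma PB1:
  assumes pbw: "path_between X d {a} fs {b}" and nc: "\<not> (\<exists>F\<in>facets X. a \<in> F \<and> b \<in> F)"
    and a: "a \<in> \<Union>(facets X)" and b: "b \<in> \<Union>(facets X)"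
  shows "pb (TT a) (TT b) (nodes fs)"
proof -
  have p: "path X d fs" using pbw by (simp add: path_between_def)
  have w: "walk X d fs" using p by (simp add: path_def)
  have ne: "fs \<noteq> []" using w by (simp add: walk_def)
  have hf: "hd fs \<in> facets X" using walk_fac[OF w, of 0] ne by (simp add: hd_conv_nth)
  have lf: "last fs \<in> facets X" using walk_fac[OF w, of "length fs - 1"] ne by (simp add: last_conv_nth)
  have ha: "a \<in> hd fs" and lb: "b \<in> last fs" using pbw by (auto simp: path_between_def)
  have n2: "2 \<le> length fs"
  proof (rule ccontr)
    assume "\<not> 2 \<le> length fs"
    moreover have "length fs \<noteq> 0" using ne by simp
    ultimately have "length fs = 1" by linarith
    then have "hd fs = last fs" by (cases fs) auto
    then show False using nc hf ha lb by auto
  qed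
  define P where "P = nodes fs"
  have nb: "nbw P" using path_nbw p P_def by simp
  have lenP: "length P = 2 * length fs - 1" using nodes_len ne P_def by simp
  have hP: "hd P \<in> TT a" using nodes_hd[OF ne] hf ha P_def by (simp add: TT_def NN_def)
  have lP: "last P \<in> TT b" using nodes_last[OF ne] lf lb P_def by (simp add: TT_def NN_def)
  have "P ! 1 = fs ! 0 \<inter> fs ! 1" using nodes_odd[of 0 fs] n2 P_def by simp
  moreover have "\<not> {a} \<subseteq> fs ! 0 \<inter> fs ! 1" using pbw n2 by (simp add: path_between_def)
  ultimately have "P ! 1 \<notin> TT a" by (simp add: TT_def)
  then have t: "\<forall>x\<in>set (tl P). x \<notin> TT a" using conv_tl[OF conn_TT[OF a] nb hP] lenP n2 by simp
  have "P ! (length P - 2) = fs ! (length fs - 2) \<inter> fs ! (length fs - 2 + 1)"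
    using nodes_odd[of "length fs - 2" fs] n2 P_def lenP
    by (simp add: algebra_simps numeral_2_eq_2 Suc_diff_Suc)
  moreover have "length fs - 2 + 1 = length fs - 1" using n2 by simp
  moreover have "\<not> {b} \<subseteq> fs ! (length fs - 1) \<inter> fs ! (length fs - 2)"
    using pbw n2 by (simp add: path_between_def)
  ultimately have "P ! (length P - 2) \<notin> TT b" by (auto simp: TT_def)
  then have u: "\<forall>x\<in>set (butlast P). x \<notin> TT b"
    using conv_butlast[OF conn_TT[OF b] nb lP] lenP n2 by simp
  show ?thesis using nb hP lP t u P_def by (simp add: pb_def)
qed

lemma PB2:
  assumes p: "path X d fs" and pbn: "pb (TT a) (TT b) (nodes fs)" and dj: "TT a \<inter> TT b = {}"
  shows "path_between X d {a} fs {b}"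
proof -
  have w: "walk X d fs" using p by (simp add: path_def)
  have ne: "fs \<noteq> []" using w by (simp add: walk_def)
  define P where "P = nodes fs"
  have nb: "nbw P" using pbn P_def by (simp add: pb_def)
  have lenP: "length P = 2 * length fs - 1" using nodes_len ne P_def by simp
  have "hd fs \<in> TT a" using pbn nodes_hd[OF ne] by (simp add: pb_def)
  then have ha: "{a} \<subseteq> hd fs" by (simp add: TT_def)
  have "last fs \<in> TT b" using pbn nodes_last[OF ne] by (simp add: pb_def)
  then have lb: "{b} \<subseteq> last fs" by (simp add: TT_def)
  have rest: "\<not> {a} \<subseteq> fs ! 0 \<inter> fs ! 1 \<and> \<not> {b} \<subseteq> fs ! (length fs - 1) \<inter> fs ! (length fs - 2)"
    if n2: "2 \<le> length fs"
  proof
    have "P ! 1 = fs ! 0 \<inter> fs ! 1" using nodes_odd[of 0 fs] n2 P_def by simp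
    moreover have "P ! 1 \<in> set (tl P)" unfolding in_tl_nth using n2 lenP by (rule_tac x=1 in exI) simp
    moreover have "P ! 1 \<in> set P" by (rule nth_mem) (use n2 lenP in simp)
    then have "P ! 1 \<in> NN" using nbw_NN[OF nb] by blast
    ultimately show "\<not> {a} \<subseteq> fs ! 0 \<inter> fs ! 1" using pbn P_def by (auto simp: pb_def TT_def)
  next
    have "P ! (length P - 2) = fs ! (length fs - 2) \<inter> fs ! (length fs - 2 + 1)"
      using nodes_odd[of "length fs - 2" fs] n2 P_def lenP
      by (simp add: algebra_simps numeral_2_eq_2 Suc_diff_Suc)
    moreover have "length fs - 2 + 1 = length fs - 1" using n2 by simp
    moreover have "P ! (length P - 2) \<in> set (butlast P)" unfolding in_butlast_nth using n2 lenP
      by (rule_tac x="length P - 2" in exI) simp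
    moreover have "P ! (length P - 2) \<in> set P" by (rule nth_mem) (use n2 lenP in simp)
    then have "P ! (length P - 2) \<in> NN" using nbw_NN[OF nb] by blast
    ultimately have "b \<notin> fs ! (length fs - 2) \<inter> fs ! (length fs - 1)" using pbn P_def
      by (auto simp: pb_def TT_def)
    then show "\<not> {b} \<subseteq> fs ! (length fs - 1) \<inter> fs ! (length fs - 2)" by blast
  qed
  show ?thesis unfolding path_between_def using p ha lb rest by simp
qed

lemma PB_ex1:
  assumes nc: "\<not> (\<exists>F\<in>facets X. a \<in> F \<and> b \<in> F)"
    and a: "a \<in> \<Union>(facets X)" and b: "b \<in> \<Union>(facets X)"
  shows "\<exists>!fs. path_between X d {a} fs {b}"
proof -
  have dj: "TT a \<inter> TT b = {}" using TT_disj nc by blast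
  obtain P where P: "pb (TT a) (TT b) P" using pb_exists conn_TT a b by blast
  have "hd P \<in> facets X" "last P \<in> facets X" using pb_hd_fac pb_last_fac P dj by blast+
  moreover have "nbw P" using P by (simp add: pb_def)
  ultimately have "\<exists>fs. nodes fs = P \<and> path X d fs" using conv_C1[of P] by simp
  then obtain fs where fs: "nodes fs = P" "path X d fs" by blast
  have ex: "path_between X d {a} fs {b}" using PB2 fs P dj by blast
  show ?thesis
  proof (rule ex1I[of _ fs])
    show "path_between X d {a} fs {b}" by (rule ex)
    fix gs assume g: "path_between X d {a} gs {b}"
    have "pb (TT a) (TT b) (nodes gs)" using PB1 g nc a b by blast
    then have "nodes gs = nodes fs" using pb_unique[OF conn_TT[OF a] conn_TT[OF b] dj] P fs by metis
    then have "filter (\<lambda>x. x \<in> facets X) (nodes gs) = filter (\<lambda>x. x \<in> facets X) (nodes fs)" by simp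
    then show "gs = fs" using filter_nodes g fs(2)
      by (simp add: path_between_def path_def)
  qed
qed

lemma PB_the:
  assumes nc: "\<not> (\<exists>F\<in>facets X. a \<in> F \<and> b \<in> F)"
    and a: "a \<in> \<Union>(facets X)" and b: "b \<in> \<Union>(facets X)"
  shows "path_between X d {a} (THE fs. path_between X d {a} fs {b}) {b}
    \<and> pb (TT a) (TT b) (nodes (THE fs. path_between X d {a} fs {b}))
    \<and> path X d (THE fs. path_between X d {a} fs {b})"
proof -
  have "path_between X d {a} (THE fs. path_between X d {a} fs {b}) {b}"
    using theI'[OF PB_ex1[OF assms]] .
  then show ?thesis using PB1[OF _ assms] by (simp add: path_between_def)
qed

lemma PB_eq:
  assumes nc: "\<not> (\<exists>F\<in>facets X. a \<in> F \<and> b \<in> F)"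
    and a: "a \<in> \<Union>(facets X)" and b: "b \<in> \<Union>(facets X)"
    and p: "path X d fs" and pbn: "pb (TT a) (TT b) (nodes fs)"
  shows "(THE fs. path_between X d {a} fs {b}) = fs"
proof -
  have "path_between X d {a} fs {b}" using PB2[OF p pbn] TT_disj nc by blast
  then show ?thesis using the1_equality[OF PB_ex1[OF assms(1-3)]] by blast
qed

definition intF :: "'a set list \<Rightarrow> 'a set set \<Rightarrow> bool" where
  "intF P Q \<longleftrightarrow> (\<forall>x\<in>set (butlast (tl P)). x \<in> facets X \<longrightarrow> x \<notin> Q)"

lemma intF_iff:
  assumes p: "path X d fs"
  shows "(\<forall>i. 1 \<le> i \<and> i < length fs - 1 \<longrightarrow> fs ! i \<notin> Q) \<longleftrightarrow> intF (nodes fs) Q"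
proof -
  have w: "walk X d fs" using p by (simp add: path_def)
  have ne: "fs \<noteq> []" using w by (simp add: walk_def)
  have lenP: "length (nodes fs) = 2 * length fs - 1" using nodes_len ne by simp
  show ?thesis
  proof
    assume a: "\<forall>i. 1 \<le> i \<and> i < length fs - 1 \<longrightarrow> fs ! i \<notin> Q"
    show "intF (nodes fs) Q" unfolding intF_def
    proof (intro ballI impI)
      fix x assume x: "x \<in> set (butlast (tl (nodes fs)))" "x \<in> facets X"
      then obtain j where j: "1 \<le> j" "j + 1 < length (nodes fs)" "nodes fs ! j = x"
        unfolding in_mid_nth by blast
      obtain i where "j = 2 * i \<or> j = 2 * i + 1" using parity by blast
      then show "x \<notin> Q"
      proof
        assume ji: "j = 2 * i"
        then have "x = fs ! i" using nodes_even[of i fs] j lenP by simp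
        moreover have "1 \<le> i" "i < length fs - 1" using ji j lenP by auto
        ultimately show ?thesis using a by blast
      next
        assume ji: "j = 2 * i + 1"
        then have "x = fs ! i \<inter> fs ! (i + 1)" using nodes_odd[of i fs] j lenP by simp
        moreover have "fs ! i \<inter> fs ! (i + 1) \<in> Rid" using inter_Rid[OF w, of i] ji j lenP by simp
        ultimately show ?thesis using x(2) Rid_not_fac by blast
      qed
    qed
  next
    assume a: "intF (nodes fs) Q"
    show "\<forall>i. 1 \<le> i \<and> i < length fs - 1 \<longrightarrow> fs ! i \<notin> Q"
    proof (intro allI impI)
      fix i assume i: "1 \<le> i \<and> i < length fs - 1"
      then have il: "i < length fs" by linarith
      then have "nodes fs ! (2 * i) = fs ! i" using nodes_even[of i fs] by simp
      moreover have "nodes fs ! (2 * i) \<in> set (butlast (tl (nodes fs)))"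
        unfolding in_mid_nth using i lenP by (rule_tac x="2 * i" in exI) auto
      moreover have "fs ! i \<in> facets X" using walk_fac[OF w il] .
      ultimately show "fs ! i \<notin> Q" using a by (auto simp: intF_def)
    qed
  qed
qed

end



lemma face_in_facet: "finite X \<Longrightarrow> F \<in> X \<Longrightarrow> \<exists>G\<in>facets X. F \<subseteq> G"
proof -
  assume "finite X" "F \<in> X"
  from finite_has_maximal2[OF this] obtain m where "m \<in> X" "F \<subseteq> m" "\<forall>b\<in>X. m \<subseteq> b \<longrightarrow> m = b"
    by blast
  then show ?thesis unfolding facets_def by blast
qed

context stk
begin

definition CC where "CC c f = (THE P. nbw P \<and> hd P = f \<and> last P = c)"

lemma CC_eq: "nbw P \<Longrightarrow> hd P = f \<Longrightarrow> last P = c \<Longrightarrow> CC c f = P"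
  unfolding CC_def by (rule the_equality) (use nbw_unique in auto)

lemma CC: "c \<in> NN \<Longrightarrow> f \<in> NN \<Longrightarrow> nbw (CC c f) \<and> hd (CC c f) = f \<and> last (CC c f) = c"
proof -
  assume "c \<in> NN" "f \<in> NN"
  then obtain P where "nbw P" "hd P = f" "last P = c" using exists_nbw by blast
  then show ?thesis using CC_eq by simp
qed

definition dl where "dl c f = length (filter (\<lambda>x. x \<in> facets X) (CC c f))"

lemma D1:
  assumes c: "c \<in> Rid" and r: "reaches X d c f r"
  shows "dl c f \<le> r"
proof -
  obtain fs where fs: "walk X d fs" "length fs = r" "hd fs = f" "c \<subseteq> last fs"
    using r by (auto simp: reaches_def)
  have ne: "fs \<noteq> []" using fs by (simp add: walk_def)
  have lf: "last fs \<in> facets X" using walk_fac[OF fs(1), of "length fs - 1"] ne by (simp add: last_conv_nth)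
  have tw: "twalk (nodes fs)" using walk_twalk fs by blast
  have "adj (last (nodes fs)) c" using adj_iff lf c fs(4) nodes_last[OF ne] by simp
  moreover have "c \<in> NN" using c by (simp add: NN_def)
  ultimately have tw2: "twalk (nodes fs @ [c])" using tw unfolding twalk_def
    by (auto simp: successively_append_iff)
  obtain R where R: "nbw R" "hd R = hd (nodes fs @ [c])" "last R = last (nodes fs @ [c])"
    "length (filter (\<lambda>x. x \<in> facets X) R) \<le> length (filter (\<lambda>x. x \<in> facets X) (nodes fs @ [c]))"
    using reduce[OF tw2, of "\<lambda>x. x \<in> facets X"] by blast
  have "hd R = f" using R(2) fs(3) nodes_hd[OF ne] nodes_ne[OF ne] by simp
  moreover have "last R = c" using R(3) by simp
  ultimately have "CC c f = R" using CC_eq R(1) by blast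
  moreover have "length (filter (\<lambda>x. x \<in> facets X) (nodes fs @ [c])) = r"
    using filter_nodes[OF fs(1)] fs(2) Rid_not_fac[OF c] by simp
  ultimately show ?thesis using R(4) by (simp add: dl_def)
qed

lemma D2:
  assumes c: "c \<in> Rid" and f: "f \<in> facets X"
  shows "reaches X d c f (dl c f)"
proof -
  define P where "P = CC c f"
  have P: "nbw P" "hd P = f" "last P = c" using CC c f P_def by (auto simp: NN_def)
  have neP: "P \<noteq> []" using P by (simp add: nbw_def twalk_def)
  have l2: "2 \<le> length P"
  proof (rule ccontr)
    assume "\<not> 2 \<le> length P"
    moreover have "length P \<noteq> 0" using neP by simp
    ultimately have "length P = 1" by linarith
    then have "hd P = last P" by (cases P) auto
    then show False using P f c Rid_not_fac by auto
  qed
  define P' where "P' = butlast P"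
  have P': "nbw P'" using nbw_butlast P(1) l2 P'_def by blast
  obtain a0 b0 r0 where abr: "P = a0 # b0 # r0" using len2[OF l2] by blast
  have hP': "hd P' = f" using P(2) abr P'_def by simp
  have PP: "P = P' @ [c]" using append_butlast_last_id[OF neP] P(3) P'_def by simp
  have neP': "P' \<noteq> []" using l2 P'_def by (cases P) auto
  have "adj (last P') c" using P(1) PP neP' by (auto simp: nbw_def twalk_def successively_append_iff)
  then have lP': "last P' \<in> facets X" "c \<subseteq> last P'" using adj_iff c Rid_not_fac by auto
  obtain fs where fs: "nodes fs = P'" "path X d fs" using conv_C1[OF P'] hP' f lP' by blast
  have w: "walk X d fs" using fs(2) by (simp add: path_def)
  have ne: "fs \<noteq> []" using w by (simp add: walk_def)
  have "dl c f = length fs"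
    unfolding dl_def P_def[symmetric] using PP filter_nodes[OF w] fs(1) Rid_not_fac[OF c] by simp
  moreover have "hd fs = f" using nodes_hd[OF ne] fs(1) hP' by simp
  moreover have "c \<subseteq> last fs" using nodes_last[OF ne] fs(1) lP' by simp
  moreover have "1 \<le> length fs" using ne by (cases fs) auto
  ultimately show ?thesis unfolding reaches_def using w by auto
qed

lemma fdist: "c \<in> Rid \<Longrightarrow> f \<in> facets X \<Longrightarrow> facet_dist X d c f = dl c f"
  unfolding facet_dist_def by (rule Least_equality) (use D1 D2 in auto)

lemma dl_pos: "c \<in> Rid \<Longrightarrow> f \<in> facets X \<Longrightarrow> 1 \<le> dl c f"
  using D2 by (auto simp: reaches_def)

lemma Xm_iff: "c \<in> Rid \<Longrightarrow> f \<in> Xm X d c m \<longleftrightarrow> f \<in> facets X \<and> dl c f \<le> m"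
proof -
  assume c: "c \<in> Rid"
  show ?thesis
  proof
    assume "f \<in> Xm X d c m" then show "f \<in> facets X \<and> dl c f \<le> m"
      unfolding Xm_def using fdist[OF c] by auto
  next
    assume f: "f \<in> facets X \<and> dl c f \<le> m"
    then have "\<exists>r. reaches X d c f r" using D2[OF c] by blast
    then show "f \<in> Xm X d c m" unfolding Xm_def using fdist[OF c] f by auto
  qed
qed

lemma Vm_iff: "c \<in> Rid \<Longrightarrow> 1 \<le> m \<Longrightarrow> x \<in> Vm X d c m \<longleftrightarrow> (\<exists>f\<in>facets X. x \<in> f \<and> dl c f \<le> m)"
  unfolding Vm_def using Xm_iff by auto

lemma dl_one: "c \<in> Rid \<Longrightarrow> g \<in> facets X \<Longrightarrow> c \<subseteq> g \<Longrightarrow> dl c g = 1"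
proof -
  assume a: "c \<in> Rid" "g \<in> facets X" "c \<subseteq> g"
  have "adj g c" using adj_iff a by simp
  moreover have "g \<in> NN" "c \<in> NN" using a by (auto simp: NN_def)
  ultimately have "nbw [g, c]" unfolding nbw_def twalk_def by simp
  then have "CC c g = [g, c]" using CC_eq by simp
  then show ?thesis using a Rid_not_fac by (simp add: dl_def)
qed

end



context stk
begin

lemma count_rev: "length (filter Q (rev xs)) = length (filter Q xs)"
  by (metis length_rev rev_filter)

lemma claimA:
  assumes c: "c \<in> Rid" and cv: "c \<notin> TT v"
    and nc: "\<not> (\<exists>F\<in>facets X. v \<in> F \<and> b \<in> F)"
    and vF: "v \<in> \<Union>(facets X)" and bF: "b \<in> \<Union>(facets X)"
    and P: "pb (TT v) (TT b) P"
    and h: "h \<in> facets X" "b \<in> h" "dl c h \<le> m"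
    and vm: "\<forall>f\<in>facets X. v \<in> f \<longrightarrow> m \<le> dl c f"
  shows "CC c (hd P) ! 1 = P ! 1"
proof (rule ccontr)
  assume ne1: "CC c (hd P) ! 1 \<noteq> P ! 1"
  have dj: "TT v \<inter> TT b = {}" using TT_disj nc by blast
  have lP: "2 \<le> length P" using pb_len P dj by blast
  define f1 where "f1 = hd P"
  have f1F: "f1 \<in> facets X" using pb_hd_fac P dj f1_def by blast
  have vf1: "v \<in> f1" using P f1_def by (simp add: pb_def TT_def)
  have cN: "c \<in> NN" using c by (simp add: NN_def)
  have f1N: "f1 \<in> NN" using f1F by (simp add: NN_def)
  define C where "C = CC c f1"
  have C: "nbw C" "hd C = f1" "last C = c" using CC[OF cN f1N] C_def by auto
  have neC: "C \<noteq> []" using C by (simp add: nbw_def twalk_def)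
  have lC: "2 \<le> length C"
  proof (rule ccontr)
    assume "\<not> 2 \<le> length C"
    moreover have "length C \<noteq> 0" using neC by simp
    ultimately have "length C = 1" by linarith
    then have "hd C = last C" by (cases C) auto
    then show False using C f1F c Rid_not_fac by auto
  qed
  have hT: "h \<in> TT b" using h by (simp add: TT_def NN_def)
  have lPT: "last P \<in> TT b" using P by (simp add: pb_def)
  obtain H where H: "nbw H" "hd H = last P" "last H = h" "set H \<subseteq> TT b"
    using conn_nbw[OF conn_TT[OF bF] lPT hT] by blast
  have neH: "H \<noteq> []" using H by (simp add: nbw_def twalk_def)
  have W1: "nbw (P @ tl H)"
  proof (rule nbw_join)
    show "nbw P" using P by (simp add: pb_def)
    show "nbw H" "last P = hd H" using H by auto
    assume "2 \<le> length P" "2 \<le> length H"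
    have "P ! (length P - 2) \<in> set (butlast P)" unfolding in_butlast_nth using lP
      by (rule_tac x="length P - 2" in exI) simp
    then have "P ! (length P - 2) \<notin> TT b" using P by (simp add: pb_def)
    moreover have "H ! 1 \<in> TT b" using H(4) \<open>2 \<le> length H\<close> by (auto simp: subset_iff)
    ultimately show "P ! (length P - 2) \<noteq> H ! 1" by auto
  qed
  define W where "W = P @ tl H"
  have lW: "2 \<le> length W" using lP W_def by simp
  have W11: "W ! 1 = P ! 1" using lP W_def by (simp add: nth_append)
  have hW: "hd W = f1" using lP W_def f1_def by (cases P) auto
  have lastW: "last W = h" using last_join[of P H] H neH W_def by simp
  have W2: "nbw (rev W @ tl C)"
  proof (rule nbw_join)
    show "nbw (rev W)" using nbw_rev[OF W1] unfolding W_def .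
    show "nbw C" by (rule C(1))
    show "last (rev W) = hd C" using hW C by (simp add: last_rev)
    assume "2 \<le> length (rev W)" "2 \<le> length C"
    have "rev W ! (length (rev W) - 2) = W ! 1" using lW by (simp add: rev_nth numeral_2_eq_2)
    then show "rev W ! (length (rev W) - 2) \<noteq> C ! 1" using W11 ne1 C_def f1_def by simp
  qed
  have "hd (rev W @ tl C) = h" using lastW lW by (cases W rule: rev_cases) auto
  moreover have "last (rev W @ tl C) = c" using last_join[of "rev W" C] C neC hW by (simp add: last_rev)
  ultimately have CCh: "CC c h = rev W @ tl C" using CC_eq W2 by blast
  define cnt where "cnt = (\<lambda>xs. length (filter (\<lambda>x. x \<in> facets X) xs))"
  have "dl c h = cnt W + cnt (tl C)" using CCh count_rev unfolding dl_def cnt_def by simp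
  moreover have "cnt C = 1 + cnt (tl C)" using C(2) neC f1F unfolding cnt_def
    by (cases C) auto
  moreover have "cnt C \<ge> m" using vm f1F vf1 C_def unfolding cnt_def dl_def by blast
  moreover have "cnt W \<ge> 2"
  proof -
    have "f1 \<noteq> h" using nc f1F vf1 h by blast
    moreover have "f1 \<in> set (filter (\<lambda>x. x \<in> facets X) W)" using hW f1F lW
      by (cases W) auto
    moreover have "h \<in> set (filter (\<lambda>x. x \<in> facets X) W)" using lastW h(1) lW
      by (cases W rule: rev_cases) auto
    ultimately have "card {f1, h} \<le> card (set (filter (\<lambda>x. x \<in> facets X) W))"
      by (intro card_mono) auto
    then have "2 \<le> card (set (filter (\<lambda>x. x \<in> facets X) W))" using \<open>f1 \<noteq> h\<close> by simp
    then show ?thesis unfolding cnt_def using card_length le_trans by blast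
  qed
  ultimately have "dl c h \<ge> m + 1" by linarith
  then show False using h(3) by simp
qed

lemma claimB:
  assumes c: "c \<in> NN" and vF: "v \<in> \<Union>(facets X)" and f: "f \<in> TT v" and g: "g \<in> TT v"
    and cf: "CC c f ! 1 \<notin> TT v" and cg: "CC c g ! 1 \<notin> TT v"
    and lf: "2 \<le> length (CC c f)"
  shows "f = g"
proof (rule ccontr)
  assume fg: "f \<noteq> g"
  obtain K where K: "nbw K" "hd K = g" "last K = f" "set K \<subseteq> TT v"
    using conn_nbw[OF conn_TT[OF vF] g f] by blast
  have lK: "2 \<le> length K"
  proof (rule ccontr)
    assume "\<not> 2 \<le> length K"
    moreover have "length K \<noteq> 0" using K by (simp add: nbw_def twalk_def)
    ultimately have "length K = 1" by linarith
    then have "hd K = last K" by (cases K) auto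
    then show False using K fg by simp
  qed
  have fN: "f \<in> NN" using f by (simp add: TT_def)
  have gN: "g \<in> NN" using g by (simp add: TT_def)
  have C: "nbw (CC c f)" "hd (CC c f) = f" "last (CC c f) = c" using CC[OF c fN] by auto
  have W: "nbw (K @ tl (CC c f))"
  proof (rule nbw_join)
    show "nbw K" "nbw (CC c f)" "last K = hd (CC c f)" using K C by auto
    assume "2 \<le> length K" "2 \<le> length (CC c f)"
    have "K ! (length K - 2) \<in> TT v" using K(4) lK by (auto simp: subset_iff)
    then show "K ! (length K - 2) \<noteq> CC c f ! 1" using cf by auto
  qed
  have "hd (K @ tl (CC c f)) = g" using K lK by (cases K) auto
  moreover have "last (K @ tl (CC c f)) = c" using last_join[of K "CC c f"] C K
    by (auto simp: nbw_def twalk_def)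
  ultimately have "CC c g = K @ tl (CC c f)" using CC_eq W by blast
  then have "CC c g ! 1 = K ! 1" using lK by (simp add: nth_append)
  moreover have "K ! 1 \<in> TT v" using K(4) lK by (auto simp: subset_iff)
  ultimately show False using cg by simp
qed

end



lemma rev_join: "A \<noteq> [] \<Longrightarrow> B \<noteq> [] \<Longrightarrow> hd A = hd B \<Longrightarrow> rev (rev A @ tl B) = rev B @ tl A"
proof -
  assume a: "A \<noteq> []" "B \<noteq> []" "hd A = hd B"
  have "rev (rev A @ tl B) = rev (tl B) @ A" by simp
  also have "\<dots> = rev (tl B) @ [hd B] @ tl A" using a by (metis append_Cons append_Nil list.collapse)
  also have "\<dots> = rev B @ tl A" using a(2) by (metis append_assoc list.collapse rev.simps(2))
  finally show ?thesis .
qed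

lemma drop1: "drop 1 ys = tl ys"
  by (cases ys) simp_all

lemma set_mid_drop: "1 \<le> n \<Longrightarrow> set (butlast (drop n xs)) \<subseteq> set (butlast (tl xs))"
proof -
  assume n: "1 \<le> n"
  have "set (butlast (drop n xs)) = set (drop n (butlast xs))" by (simp only: butlast_drop)
  also have "\<dots> \<subseteq> set (drop 1 (butlast xs))" by (rule set_drop_subset_set_drop[OF n])
  also have "\<dots> = set (butlast (tl xs))" by (simp only: drop1 butlast_tl)
  finally show ?thesis .
qed

context stk
begin

lemma joinside:
  assumes A: "nbw A" and B: "nbw B" and hAB: "hd A = hd B" and lA: "2 \<le> length A" and lB: "2 \<le> length B"
    and d1: "A ! 1 \<noteq> B ! 1" and S: "conn S t" and lS: "last A \<in> S" and nS: "A ! (length A - 2) \<notin> S"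
  shows "nbw (rev A @ tl B) \<and> hd (rev A @ tl B) = last A \<and> last (rev A @ tl B) = last B
     \<and> (\<forall>y\<in>set (tl (rev A @ tl B)). y \<notin> S)"
proof -
  have neA: "A \<noteq> []" "B \<noteq> []" using lA lB by auto
  have r1: "rev A ! (length (rev A) - 2) = A ! 1" using lA by (simp add: rev_nth numeral_2_eq_2)
  have nb: "nbw (rev A @ tl B)"
  proof (rule nbw_join)
    show "nbw (rev A)" using nbw_rev A by blast
    show "nbw B" by (rule B)
    show "last (rev A) = hd B" using hAB by (simp add: last_rev)
    show "rev A ! (length (rev A) - 2) \<noteq> B ! 1" using r1 d1 by simp
  qed
  have h: "hd (rev A @ tl B) = last A" using neA by (simp add: hd_rev)
  have l: "last (rev A @ tl B) = last B" using last_join[of "rev A" B] neA hAB by (simp add: last_rev)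
  have "(rev A @ tl B) ! 1 = A ! (length A - 2)" using lA by (simp add: nth_append rev_nth numeral_2_eq_2)
  then have "(\<forall>y\<in>set (tl (rev A @ tl B)). y \<notin> S)"
    using conv_tl[OF S nb] h lS nS lA by simp
  then show ?thesis using nb h l by simp
qed

lemma claimC:
  assumes Pu: "pb (TT v) (TT u) Pu" and Pw: "pb (TT v) (TT w) Pw"
    and ncu: "\<not> (\<exists>F\<in>facets X. v \<in> F \<and> u \<in> F)" and ncw: "\<not> (\<exists>F\<in>facets X. v \<in> F \<and> w \<in> F)"
    and vF: "v \<in> \<Union>(facets X)" and uF: "u \<in> \<Union>(facets X)" and wF: "w \<in> \<Union>(facets X)"
    and h0: "Pu ! 0 = Pw ! 0" and h1: "Pu ! 1 = Pw ! 1" and uw: "u \<noteq> w"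
    and Qu: "last Pu \<in> Q" "intF Pu Q" and Qw: "last Pw \<in> Q" "intF Pw Q"
  shows "\<exists>P. pb (TT u) (TT w) P \<and> TT u \<inter> TT w = {} \<and> hd P = last Pu \<and> last P = last Pw \<and> intF P Q"
proof -
  have dju: "TT v \<inter> TT u = {}" using TT_disj ncu by blast
  have djw: "TT v \<inter> TT w = {}" using TT_disj ncw by blast
  define lu where "lu = length Pu"
  define lw where "lw = length Pw"
  have lu2: "2 \<le> lu" using pb_len Pu dju lu_def by blast
  have lw2: "2 \<le> lw" using pb_len Pw djw lw_def by blast
  have nbu: "nbw Pu" using Pu by (simp add: pb_def)
  have nbw': "nbw Pw" using Pw by (simp add: pb_def)
  have luF: "last Pu \<in> facets X" using pb_last_fac Pu dju by blast
  have lwF: "last Pw \<in> facets X" using pb_last_fac Pw djw by blast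
  define Pk where "Pk = (\<lambda>k. k \<le> lu \<and> k \<le> lw \<and> take k Pu = take k Pw)"
  define k where "k = (GREATEST k. Pk k)"
  have P2: "Pk 2"
  proof -
    have "take 2 Pu = [Pu ! 0, Pu ! 1]" using lu2 lu_def
      by (cases Pu; cases "tl Pu") (auto simp: numeral_2_eq_2)
    moreover have "take 2 Pw = [Pw ! 0, Pw ! 1]" using lw2 lw_def
      by (cases Pw; cases "tl Pw") (auto simp: numeral_2_eq_2)
    ultimately show ?thesis using h0 h1 lu2 lw2 unfolding Pk_def by simp
  qed
  have bnd: "\<And>y. Pk y \<Longrightarrow> y \<le> lu" unfolding Pk_def by simp
  have Pkk: "Pk k" using GreatestI_nat[of Pk 2 lu, OF P2 bnd] k_def by simp
  have k2: "2 \<le> k" using Greatest_le_nat[of Pk 2 lu, OF P2 bnd] k_def by simp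
  have kmax: "Pu ! k \<noteq> Pw ! k" if "k < lu" "k < lw"
  proof
    assume e: "Pu ! k = Pw ! k"
    have "take (Suc k) Pu = take (Suc k) Pw" using Pkk e that lu_def lw_def
      by (simp add: Pk_def take_Suc_conv_app_nth)
    then have "Pk (Suc k)" using that unfolding Pk_def by simp
    then have "Suc k \<le> k" using Greatest_le_nat[of Pk "Suc k" lu, OF _ bnd] k_def by simp
    then show False by simp
  qed
  have eqk: "\<And>i. i < k \<Longrightarrow> Pu ! i = Pw ! i"
  proof -
    fix i assume i: "i < k"
    have "take k Pu ! i = take k Pw ! i" using Pkk by (simp add: Pk_def)
    then show "Pu ! i = Pw ! i" using i by simp
  qed
  have kl: "k \<le> lu" "k \<le> lw" using Pkk by (auto simp: Pk_def)
  have midu: "Pu ! j \<in> set (butlast (tl Pu))" if "1 \<le> j" "j + 1 < lu" for j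
    unfolding in_mid_nth using that lu_def by blast
  have midw: "Pw ! j \<in> set (butlast (tl Pw))" if "1 \<le> j" "j + 1 < lw" for j
    unfolding in_mid_nth using that lw_def by blast
  consider (eq) "k = lu" "k = lw" | (a) "k = lu" "k < lw" | (b) "k < lu" "k = lw" | (c) "k < lu" "k < lw"
    using kl by linarith
  then show ?thesis
  proof cases
    case eq
    have "take k Pu = take k Pw" using Pkk by (simp add: Pk_def)
    moreover have "take k Pu = Pu" using eq lu_def by simp
    moreover have "take k Pw = Pw" using eq lw_def by simp
    ultimately have PP: "Pu = Pw" by simp
    define l where "l = last Pu"
    define r where "r = Pu ! (lu - 2)"
    have rb: "r \<in> set (butlast Pu)" unfolding in_butlast_nth r_def using lu2 lu_def
      by (rule_tac x="lu - 2" in exI) simp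
    have "r \<in> set Pu" using rb by (rule in_set_butlastD)
    then have rN: "r \<in> NN" by (rule nbw_NN[OF nbu])
    have "r \<notin> TT u" using Pu rb unfolding pb_def by blast
    then have ur: "u \<notin> r" using rN by (simp add: TT_def)
    have "r \<notin> TT w" using Pw rb PP unfolding pb_def by blast
    then have wr: "w \<notin> r" using rN by (simp add: TT_def)
    have "l \<in> TT u" using Pu l_def unfolding pb_def by blast
    then have ul: "u \<in> l" by (simp add: TT_def)
    have "l \<in> TT w" using Pw l_def PP unfolding pb_def by blast
    then have wl: "w \<in> l" by (simp add: TT_def)
    have "adj r l"
    proof -
      have "adj (Pu ! (lu - 2)) (Pu ! Suc (lu - 2))" using nbu lu2 lu_def
        by (simp add: nbw_def twalk_def successively_conv_nth)
      moreover have "Suc (lu - 2) = lu - 1" using lu2 by simp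
      moreover have "Pu \<noteq> []" using lu2 lu_def by auto
      then have "Pu ! (lu - 1) = l" using l_def lu_def by (simp add: last_conv_nth)
      ultimately show ?thesis using r_def by simp
    qed
    then have rl: "r \<in> Rid" "r \<subseteq> l" using adj_iff luF l_def Rid_not_fac by auto
    have cr: "card r = d" using rl(1) by (simp add: Rid_def)
    have cl: "card l = d + 1" using fac_card luF l_def by simp
    have "card (l - r) = card l - card r" using card_Diff_subset[OF Rid_fin[OF rl(1)] rl(2)] .
    then have "card (l - r) = 1" using cr cl by simp
    then obtain z where z: "l - r = {z}" by (rule card_1_singletonE)
    have "u \<in> l - r" using ul ur by simp
    then have "u = z" using z by simp
    have "w \<in> l - r" using wl wr by simp
    then have "w = z" using z by simp
    then have "u = w" using \<open>u = z\<close> by simp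
    then show ?thesis using uw by simp
  next
    case a
    have "Pu \<noteq> []" using lu2 lu_def by auto
    then have "last Pu = Pu ! (lu - 1)" using lu_def by (simp add: last_conv_nth)
    then have e: "last Pu = Pw ! (lu - 1)" using eqk[of "lu - 1"] a lu2 by simp
    have "Pw ! (lu - 1) \<in> set (butlast (tl Pw))" using midw[of "lu - 1"] a lu2 by simp
    then show ?thesis using Qw(2) Qu(1) luF e by (auto simp: intF_def)
  next
    case b
    have "Pw \<noteq> []" using lw2 lw_def by auto
    then have "last Pw = Pw ! (lw - 1)" using lw_def by (simp add: last_conv_nth)
    then have e: "last Pw = Pu ! (lw - 1)" using eqk[of "lw - 1"] b lw2 by simp
    have "Pu ! (lw - 1) \<in> set (butlast (tl Pu))" using midu[of "lw - 1"] b lw2 by simp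
    then show ?thesis using Qu(2) Qw(1) lwF e by (auto simp: intF_def)
  next
    case c
    define Du where "Du = drop (k - 1) Pu"
    define Dw where "Dw = drop (k - 1) Pw"
    have lDu: "length Du = lu - k + 1" "2 \<le> length Du" using c k2 Du_def lu_def by auto
    have lDw: "length Dw = lw - k + 1" "2 \<le> length Dw" using c k2 Dw_def lw_def by auto
    have nDu: "nbw Du" using nbw_drop nbu c k2 Du_def lu_def by simp
    have nDw: "nbw Dw" using nbw_drop nbw' c k2 Dw_def lw_def by simp
    have hD: "hd Du = hd Dw" using eqk[of "k - 1"] c k2 Du_def Dw_def lu_def lw_def
      by (simp add: hd_drop_conv_nth)
    have D1: "Du ! 1 \<noteq> Dw ! 1" using kmax c k2 Du_def Dw_def lu_def lw_def by simp
    have lastDu: "last Du = last Pu" using Du_def c lu_def by simp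
    have lastDw: "last Dw = last Pw" using Dw_def c lw_def by simp
    have Du2: "Du ! (length Du - 2) = Pu ! (lu - 2)" using Du_def lDu c k2 lu_def by simp
    have Dw2: "Dw ! (length Dw - 2) = Pw ! (lw - 2)" using Dw_def lDw c k2 lw_def by simp
    have bu: "Pu ! (lu - 2) \<in> set (butlast Pu)" unfolding in_butlast_nth using lu2 lu_def
      by (rule_tac x="lu - 2" in exI) simp
    have bw: "Pw ! (lw - 2) \<in> set (butlast Pw)" unfolding in_butlast_nth using lw2 lw_def
      by (rule_tac x="lw - 2" in exI) simp
    have luT: "last Pu \<in> TT u" using Pu by (simp add: pb_def)
    have lwT: "last Pw \<in> TT w" using Pw by (simp add: pb_def)
    have J1: "nbw (rev Du @ tl Dw) \<and> hd (rev Du @ tl Dw) = last Du \<and> last (rev Du @ tl Dw) = last Dw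
       \<and> (\<forall>y\<in>set (tl (rev Du @ tl Dw)). y \<notin> TT u)"
      using joinside[OF nDu nDw hD lDu(2) lDw(2) D1 conn_TT[OF uF]] lastDu luT Du2 bu Pu
      by (simp add: pb_def)
    have J2: "nbw (rev Dw @ tl Du) \<and> hd (rev Dw @ tl Du) = last Dw \<and> last (rev Dw @ tl Du) = last Du
       \<and> (\<forall>y\<in>set (tl (rev Dw @ tl Du)). y \<notin> TT w)"
      using joinside[OF nDw nDu hD[symmetric] lDw(2) lDu(2) D1[symmetric] conn_TT[OF wF]] lastDw lwT Dw2 bw Pw
      by (simp add: pb_def)
    define P where "P = rev Du @ tl Dw"
    have "Du \<noteq> []" "Dw \<noteq> []" using lDu lDw by auto
    then have revP: "rev P = rev Dw @ tl Du" using rev_join[of Du Dw] hD unfolding P_def by blast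
    have nbP: "nbw P" using J1 P_def by simp
    have hP: "hd P = last Pu" using J1 P_def lastDu by simp
    have lP: "last P = last Pw" using J1 P_def lastDw by simp
    have t1: "\<forall>y\<in>set (tl P). y \<notin> TT u" using J1 P_def by simp
    have t2: "\<forall>y\<in>set (butlast P). y \<notin> TT w"
    proof -
      have "set (butlast P) = set (tl (rev P))" by (simp add: tl_rev')
      then show ?thesis using J2 revP by simp
    qed
    have "hd Du \<in> set Du" using lDu by (cases Du) auto
    then have x_in: "hd Du \<in> set P" unfolding P_def by simp
    have xu: "hd Du = Pu ! (k - 1)" using Du_def c k2 lu_def by (simp add: hd_drop_conv_nth)
    have xw: "hd Du = Pw ! (k - 1)" using hD Dw_def c k2 lw_def by (simp add: hd_drop_conv_nth)
    have xnu: "hd Du \<notin> TT u"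
    proof -
      have "Pu ! (k - 1) \<in> set (butlast Pu)" unfolding in_butlast_nth using c k2 lu_def
        by (rule_tac x="k - 1" in exI) simp
      then show ?thesis using xu Pu by (simp add: pb_def)
    qed
    have xnw: "hd Du \<notin> TT w"
    proof -
      have "Pw ! (k - 1) \<in> set (butlast Pw)" unfolding in_butlast_nth using c k2 lw_def
        by (rule_tac x="k - 1" in exI) simp
      then show ?thesis using xw Pw by (simp add: pb_def)
    qed
    have dj: "TT u \<inter> TT w = {}"
    proof (rule ccontr)
      assume "TT u \<inter> TT w \<noteq> {}"
      then obtain g where g: "g \<in> TT u" "g \<in> TT w" by blast
      obtain H1 where H1: "nbw H1" "hd H1 = last Pu" "last H1 = g" "set H1 \<subseteq> TT u"
        using conn_nbw[OF conn_TT[OF uF] luT g(1)] by blast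
      obtain H2 where H2: "nbw H2" "hd H2 = g" "last H2 = last Pw" "set H2 \<subseteq> TT w"
        using conn_nbw[OF conn_TT[OF wF] g(2) lwT] by blast
      have ne2: "H1 \<noteq> []" "H2 \<noteq> []" using H1 H2 by (auto simp: nbw_def twalk_def)
      have "twalk (H1 @ tl H2)" using twalk_join H1 H2 by (simp add: nbw_def)
      then obtain R where R: "nbw R" "hd R = hd (H1 @ tl H2)" "last R = last (H1 @ tl H2)"
        "set R \<subseteq> set (H1 @ tl H2)" using reduce[of "H1 @ tl H2" "\<lambda>_. True"] by blast
      have "hd R = last Pu" using R(2) H1 ne2 by simp
      moreover have "last R = last Pw" using R(3) last_join[of H1 H2] H1 H2 ne2 by simp
      ultimately have "R = P" using nbw_unique R(1) nbP hP lP by metis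
      moreover have "set (tl H2) \<subseteq> set H2" by (cases H2) auto
      then have "set (H1 @ tl H2) \<subseteq> TT u \<union> TT w" using H1 H2 by auto
      ultimately have "hd Du \<in> TT u \<union> TT w" using R(4) x_in by blast
      then show False using xnu xnw by blast
    qed
    have ipb: "pb (TT u) (TT w) P" unfolding pb_def using nbP hP lP t1 t2 luT lwT by simp
    have iF: "intF P Q"
    proof -
      have "butlast (tl P) = rev (butlast Du) @ butlast (tl Dw)"
      proof -
        have "rev Du \<noteq> []" using lDu by auto
        then have "tl P = tl (rev Du) @ tl Dw" using P_def by simp
        then have "tl P = rev (butlast Du) @ tl Dw" by (simp only: tl_rev')
        moreover have "tl Dw \<noteq> []" using lDw by (cases Dw) auto
        ultimately show ?thesis by (simp add: butlast_append)
      qed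
      moreover have "set (butlast Du) \<subseteq> set (butlast (tl Pu))"
        using set_mid_drop[of "k - 1" Pu] k2 Du_def by simp
      moreover have "set (butlast (tl Dw)) \<subseteq> set (butlast (tl Pw))"
      proof -
        have "tl Dw = drop (k - 1) (tl Pw)" using Dw_def by (simp only: tl_drop)
        also have "\<dots> = drop (Suc (k - 1)) Pw" by (simp only: drop_Suc)
        also have "Suc (k - 1) = k" using k2 by simp
        finally have "tl Dw = drop k Pw" by simp
        then show ?thesis using set_mid_drop[of k Pw] k2 by simp
      qed
      ultimately have "set (butlast (tl P)) \<subseteq> set (butlast (tl Pu)) \<union> set (butlast (tl Pw))" by auto
      then show ?thesis using Qu(2) Qw(2) by (auto simp: intF_def)
    qed
    show ?thesis using ipb dj hP lP iF by blast
  qed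
qed

end



context stk
begin

lemma CC_len: "c \<in> Rid \<Longrightarrow> f \<in> facets X \<Longrightarrow> 2 \<le> length (CC c f)"
proof -
  assume c: "c \<in> Rid" and f: "f \<in> facets X"
  have C: "nbw (CC c f)" "hd (CC c f) = f" "last (CC c f) = c" using CC c f by (auto simp: NN_def)
  have ne: "CC c f \<noteq> []" using C by (simp add: nbw_def twalk_def)
  show ?thesis
  proof (rule ccontr)
    assume "\<not> 2 \<le> length (CC c f)"
    moreover have "length (CC c f) \<noteq> 0" using ne by simp
    ultimately have "length (CC c f) = 1" by linarith
    then have "hd (CC c f) = last (CC c f)" by (cases "CC c f") auto
    then show False using C c f Rid_not_fac by auto
  qed
qed

lemma main_stk:
  assumes finX: "finite X" and cX: "c \<in> X" "card c = d"
    and F: "partition_on (facets X) \<F>" and m1: "1 \<le> m"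
    and vV: "v \<in> Vm X d c m - Vm X d c (m - 1)"
    and uV: "u \<in> Vm X d c m" and wV: "w \<in> Vm X d c m" and uw: "u \<noteq> w"
    and ru: "rel_V X d \<F> v u" and rw: "rel_V X d \<F> v w"
  shows "rel_V X d \<F> u w"
proof -
  have UX: "\<And>x. x \<in> \<Union>X \<Longrightarrow> x \<in> \<Union>(facets X)"
  proof -
    fix x assume "x \<in> \<Union>X"
    then obtain G where "G \<in> X" "x \<in> G" by blast
    then obtain H where "H \<in> facets X" "G \<subseteq> H" using face_in_facet[OF finX] by blast
    then show "x \<in> \<Union>(facets X)" using \<open>x \<in> G\<close> by blast
  qed
  obtain g where g: "g \<in> facets X" "c \<subseteq> g" using face_in_facet[OF finX cX(1)] by blast
  have cR: "c \<in> Rid" using g cX by (auto simp: Rid_def)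
  have ru': "v \<noteq> u \<and> v \<in> \<Union>X \<and> u \<in> \<Union>X \<and> \<not> (\<exists>F\<in>facets X. v \<in> F \<and> u \<in> F)"
    and ruQ: "\<exists>Q\<in>\<F>. hd (THE fs. path_between X d {v} fs {u}) \<in> Q \<and> last (THE fs. path_between X d {v} fs {u}) \<in> Q \<and>
         (\<forall>i. 1 \<le> i \<and> i < length (THE fs. path_between X d {v} fs {u}) - 1 \<longrightarrow> (THE fs. path_between X d {v} fs {u}) ! i \<notin> Q)"
    using ru unfolding rel_V_def Let_def by auto
  have rw': "v \<noteq> w \<and> v \<in> \<Union>X \<and> w \<in> \<Union>X \<and> \<not> (\<exists>F\<in>facets X. v \<in> F \<and> w \<in> F)"
    and rwQ: "\<exists>Q\<in>\<F>. hd (THE fs. path_between X d {v} fs {w}) \<in> Q \<and> last (THE fs. path_between X d {v} fs {w}) \<in> Q \<and>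
         (\<forall>i. 1 \<le> i \<and> i < length (THE fs. path_between X d {v} fs {w}) - 1 \<longrightarrow> (THE fs. path_between X d {v} fs {w}) ! i \<notin> Q)"
    using rw unfolding rel_V_def Let_def by auto
  have vF: "v \<in> \<Union>(facets X)" and uF: "u \<in> \<Union>(facets X)" and wF: "w \<in> \<Union>(facets X)"
    using ru' rw' UX by auto
  have ncu: "\<not> (\<exists>F\<in>facets X. v \<in> F \<and> u \<in> F)" and ncw: "\<not> (\<exists>F\<in>facets X. v \<in> F \<and> w \<in> F)"
    using ru' rw' by auto
  define fsu where "fsu = (THE fs. path_between X d {v} fs {u})"
  define fsw where "fsw = (THE fs. path_between X d {v} fs {w})"
  obtain Qu where Qu: "Qu \<in> \<F>" "hd fsu \<in> Qu" "last fsu \<in> Qu" "\<forall>i. 1 \<le> i \<and> i < length fsu - 1 \<longrightarrow> fsu ! i \<notin> Qu"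
    using ruQ fsu_def by blast
  obtain Qw where Qw: "Qw \<in> \<F>" "hd fsw \<in> Qw" "last fsw \<in> Qw" "\<forall>i. 1 \<le> i \<and> i < length fsw - 1 \<longrightarrow> fsw ! i \<notin> Qw"
    using rwQ fsw_def by blast
  have thu: "pb (TT v) (TT u) (nodes fsu)" "path X d fsu" using PB_the[OF ncu vF uF] fsu_def by auto
  have thw: "pb (TT v) (TT w) (nodes fsw)" "path X d fsw" using PB_the[OF ncw vF wF] fsw_def by auto
  have neu: "fsu \<noteq> []" using thu(2) by (simp add: path_def walk_def)
  have new: "fsw \<noteq> []" using thw(2) by (simp add: path_def walk_def)
  define Pu where "Pu = nodes fsu"
  define Pw where "Pw = nodes fsw"
  have Pu: "pb (TT v) (TT u) Pu" "hd Pu = hd fsu" "last Pu = last fsu" "intF Pu Qu"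
    using thu nodes_hd[OF neu] nodes_last[OF neu] intF_iff[OF thu(2)] Qu(4) Pu_def by auto
  have Pw: "pb (TT v) (TT w) Pw" "hd Pw = hd fsw" "last Pw = last fsw" "intF Pw Qw"
    using thw nodes_hd[OF new] nodes_last[OF new] intF_iff[OF thw(2)] Qw(4) Pw_def by auto
  have dju: "TT v \<inter> TT u = {}" using TT_disj ncu by blast
  have djw: "TT v \<inter> TT w = {}" using TT_disj ncw by blast
  have lu2: "2 \<le> length Pu" using pb_len Pu(1) dju by blast
  have lw2: "2 \<le> length Pw" using pb_len Pw(1) djw by blast
  obtain hu where hu: "hu \<in> facets X" "u \<in> hu" "dl c hu \<le> m" using uV Vm_iff[OF cR m1] by blast
  obtain hw where hw: "hw \<in> facets X" "w \<in> hw" "dl c hw \<le> m" using wV Vm_iff[OF cR m1] by blast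
  have vm: "\<forall>f\<in>facets X. v \<in> f \<longrightarrow> m \<le> dl c f"
  proof (intro ballI impI)
    fix f assume f: "f \<in> facets X" "v \<in> f"
    show "m \<le> dl c f"
    proof (cases "m = 1")
      case True then show ?thesis using dl_pos[OF cR f(1)] by simp
    next
      case False
      then have m2: "1 \<le> m - 1" using m1 by simp
      have "v \<notin> Vm X d c (m - 1)" using vV by simp
      then have "\<not> dl c f \<le> m - 1" using Vm_iff[OF cR m2] f by blast
      then show ?thesis by simp
    qed
  qed
  have vc: "v \<notin> c"
  proof (cases "m = 1")
    case True
    then show ?thesis using vV by (simp add: Vm_def)
  next
    case False
    then have m2: "1 \<le> m - 1" using m1 by simp
    have "dl c g = 1" using dl_one[OF cR g] .
    then have "\<not> v \<in> g" using vV Vm_iff[OF cR m2] g(1) m2 by auto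
    then show ?thesis using g(2) by blast
  qed
  have cv: "c \<notin> TT v" using vc by (simp add: TT_def)
  have Au: "CC c (hd Pu) ! 1 = Pu ! 1" using claimA[OF cR cv ncu vF uF Pu(1) hu vm] .
  have Aw: "CC c (hd Pw) ! 1 = Pw ! 1" using claimA[OF cR cv ncw vF wF Pw(1) hw vm] .
  have hPu: "hd Pu \<in> TT v" "hd Pu \<in> facets X" using Pu(1) pb_hd_fac dju by (auto simp: pb_def)
  have hPw: "hd Pw \<in> TT v" "hd Pw \<in> facets X" using Pw(1) pb_hd_fac djw by (auto simp: pb_def)
  have t1u: "Pu ! 1 \<notin> TT v"
  proof -
    have "Pu ! 1 \<in> set (tl Pu)" unfolding in_tl_nth using lu2 by (rule_tac x=1 in exI) simp
    then show ?thesis using Pu(1) by (simp add: pb_def)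
  qed
  have t1w: "Pw ! 1 \<notin> TT v"
  proof -
    have "Pw ! 1 \<in> set (tl Pw)" unfolding in_tl_nth using lw2 by (rule_tac x=1 in exI) simp
    then show ?thesis using Pw(1) by (simp add: pb_def)
  qed
  have cN: "c \<in> NN" using cR by (simp add: NN_def)
  have hh: "hd Pu = hd Pw"
    using claimB[OF cN vF hPu(1) hPw(1)] Au Aw t1u t1w CC_len[OF cR hPu(2)] by simp
  have "Pu \<noteq> []" "Pw \<noteq> []" using lu2 lw2 by auto
  then have h0: "Pu ! 0 = Pw ! 0" using hh by (simp add: hd_conv_nth)
  have h1: "Pu ! 1 = Pw ! 1" using Au Aw hh by simp
  have QQ: "Qw = Qu"
  proof (rule ccontr)
    assume "Qw \<noteq> Qu"
    then have "Qw \<inter> Qu = {}" using F Qu(1) Qw(1) by (auto simp: partition_on_def disjoint_def)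
    moreover have "hd fsu \<in> Qw" using Qw(2) Pu(2) Pw(2) hh by simp
    ultimately show False using Qu(2) by blast
  qed
  obtain P where P: "pb (TT u) (TT w) P" "TT u \<inter> TT w = {}" "hd P = last Pu" "last P = last Pw" "intF P Qu"
    using claimC[OF Pu(1) Pw(1) ncu ncw vF uF wF h0 h1 uw, of Qu] Pu(3,4) Pw(3,4) Qu(3) Qw(3) QQ by auto
  have ncuw: "\<not> (\<exists>F\<in>facets X. u \<in> F \<and> w \<in> F)"
  proof
    assume "\<exists>F\<in>facets X. u \<in> F \<and> w \<in> F"
    then obtain F where "F \<in> facets X" "u \<in> F" "w \<in> F" by blast
    then have "F \<in> TT u \<inter> TT w" by (simp add: TT_def NN_def)
    then show False using P(2) by simp
  qed
  have "hd P \<in> facets X" "last P \<in> facets X" using pb_hd_fac pb_last_fac P(1,2) by blast+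
  moreover have "nbw P" using P(1) by (simp add: pb_def)
  ultimately have "\<exists>fs. nodes fs = P \<and> path X d fs" using conv_C1 by simp
  then obtain fs where fs: "nodes fs = P" "path X d fs" by blast
  have nefs: "fs \<noteq> []" using fs(2) by (simp add: path_def walk_def)
  have the: "(THE fs. path_between X d {u} fs {w}) = fs"
    using PB_eq[OF ncuw uF wF fs(2)] P(1) fs(1) by simp
  have h: "hd fs \<in> Qu" using nodes_hd[OF nefs] fs(1) P(3) Pu(3) Qu(3) by simp
  have l: "last fs \<in> Qu" using nodes_last[OF nefs] fs(1) P(4) Pw(3) Qw(3) QQ by simp
  have int: "\<forall>i. 1 \<le> i \<and> i < length fs - 1 \<longrightarrow> fs ! i \<notin> Qu"
    using intF_iff[OF fs(2), of Qu] fs(1) P(5) by blast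
  have ex: "\<exists>Q\<in>\<F>. hd fs \<in> Q \<and> last fs \<in> Q \<and> (\<forall>i. 1 \<le> i \<and> i < length fs - 1 \<longrightarrow> fs ! i \<notin> Q)"
    using Qu(1) h l int by blast
  have uX: "u \<in> \<Union>X" using ru' by blast
  have wX: "w \<in> \<Union>X" using rw' by blast
  have "let fs = THE fs. path_between X d {u} fs {w} in
       \<exists>Q\<in>\<F>. hd fs \<in> Q \<and> last fs \<in> Q \<and> (\<forall>i. 1 \<le> i \<and> i < length fs - 1 \<longrightarrow> fs ! i \<notin> Q)"
    unfolding the Let_def by (rule ex)
  then show ?thesis unfolding rel_V_def using uw uX wX ncuw by blast
qed

end

theorem lemma3p3:
  fixes V :: "'a set" and X :: "'a set set" and d :: nat and \<F> :: "'a set set set"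
    and c :: "'a set" and m :: nat and u v w :: 'a
  assumes "simplicial_complex V X"
    and "stacked X d"
    and "partition_on (facets X) \<F>"
    and "c \<in> X" and "card c = d"
    and "1 \<le> m"
    and "v \<in> Vm X d c m - Vm X d c (m - 1)"
    and "u \<in> Vm X d c m" and "w \<in> Vm X d c m" and "u \<noteq> w"
    and "rel_V X d \<F> v u" and "rel_V X d \<F> v w"
  shows "rel_V X d \<F> u w"
proof -
  obtain L where L: "pure X d" "L \<noteq> []" "distinct L" "set L = facets X"
    "\<forall>p. 1 \<le> p \<and> p < length L \<longrightarrow>
        (\<exists>v. L ! p - (\<Union>j<p. L ! j) = {v} \<and> (\<exists>j<p. L ! p - {v} \<subseteq> L ! j))"
    using assms(2) unfolding stacked_def by blast
  interpret stk X d L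
    by (unfold_locales) (use L in auto)
  have "finite X"
  proof -
    have "finite V" "X \<subseteq> Pow V" using assms(1) by (auto simp: simplicial_complex_def)
    then show ?thesis using finite_subset[of X "Pow V"] by simp
  qed
  then show ?thesis by (rule main_stk[OF _ assms(4,5,3,6-12)])
qed



end
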